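(* Let $A$ be a commutative unital $\mathbb{K}$-algebra equipped with an involution $\dagger:A\to A$ (a linear map with $\dagger\circ\dagger=\mathrm{id}$ and $[a;b]^\dagger=[b^\dagger;a^\dagger]$). Let $q\in\{\theta,\mathrm r,\ell\}$ ($\theta\in\mathbb{K}$) and extend $\dagger$ to $T^+(A)$ by $(a_1\otimes\cdots\otimes a_n)^\dagger:=a_1^\dagger\otimes\cdots\otimes a_n^\dagger$. Then $(T^+(A),\bar\bullet^q,P_A,\dagger)$ is an involutive commutative $\mathbf R_q$-algebra, and together with $i_A:a\mapsto a\otimes1_{\mathbb{K}}$ it is the free involutive commutative $\mathbf R_q$-algebra over $(A,\dagger)$: for every unital commutative $\mathbf R_q$-algebra $(X,P)$ with involution $\dagger'$ commuting with $P$, and every unital algebra morphism $\phi:A\to X$ with $\phi(a^\dagger)=\phi(a)^{\dagger'}$, there is a unique $\mathbf R_q$-algebra morphism $\tilde\phi:T^+(A)\to X$ with $\tilde\phi\circ i_A=\phi$, and it satisfies $\tilde\phi(U^\dagger)=\tilde\phi(U)^{\dagger'}$ for all $U$.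
   Context: $\mathbb{K}$ is a field of characteristic $0$; $A$ has product $[a;b]$ and unit $1_A$. $T(A)=\bigoplus_{n\ge0}A^{\otimes n}$, $A^{\otimes0}=\mathbb{K}1_{\mathbb{K}}$, $a\otimes1_{\mathbb{K}}$ identified with $a$. For $q\in\{\theta,\mathrm r,\ell\}$ the product $\bullet^q$ on $T(A)$ is bilinear with $k1_{\mathbb{K}}\bullet^qU=kU=U\bullet^qk1_{\mathbb{K}}$ and for $a,b\in A$, $U,V\in T(A)$: $(a\otimes U)\bullet^q(b\otimes V)=a\otimes(U\bullet^q(b\otimes V))+b\otimes((a\otimes U)\bullet^qV)+M_q$, where $M_\theta=\theta[a;b]\otimes(U\bullet^\theta V)$ (quasi-shuffle of weight $\theta$), $M_{\mathrm r}=-1_A\otimes[a;b]\otimes(U\bullet^{\mathrm r}V)$ (right-shift shuffle), $M_\ell=-[a;b]\otimes1_A\otimes(U\bullet^\ell V)$ (left-shift shuffle). $T^+(A)=A\otimes T(A)$ with product $(a\otimes U)\bar\bullet^q(b\otimes V)=[a;b]\otimes(U\bullet^qV)$, unit $1_A\otimes1_{\mathbb{K}}$, and $P_A(a_1\otimes\cdots\otimes a_n)=1_A\otimes a_1\otimes\cdots\otimes a_n$. An $\mathbf R_\theta$-algebra is a Rota--Baxter algebra of scalar weight $\theta$: $(B,P)$ with $P(x)P(y)=P(P(x)y+xP(y))+\theta P(xy)$; an $\mathbf R_{\mathrm r}$-algebra is a Nijenhuis algebra: $P(x)P(y)=P(P(x)y+xP(y))-P^2(xy)$; an $\mathbf R_\ell$-algebra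 is a $TD$-algebra: $P(x)P(y)=P(P(x)y+xP(y))-P(xP(1_B)y)$. Morphisms of $\mathbf R_q$-algebras are unital algebra homomorphisms $f$ with $fP_1=P_2f$. An involutive commutative $\mathbf R_q$-algebra is a unital commutative $\mathbf R_q$-algebra $(B,P)$ with an involution $\dagger$ (linear, $\dagger^2=\mathrm{id}$, $(xy)^\dagger=y^\dagger x^\dagger$) satisfying $P(x^\dagger)=P(x)^\dagger$. *)

theory Defs
  imports "HOL-Library.Function_Algebras"
begin

datatype 'k rq = RTheta 'k | RNij | RTD

section \<open>Commutative unital K-algebras (the ring structure is the type class comm_ring_1,
  the K-action is an explicit scalar multiplication)\<close>

definition kalg :: "('k::field \<Rightarrow> 'x::comm_ring_1 \<Rightarrow> 'x) \<Rightarrow> bool" where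
  "kalg s \<longleftrightarrow> (\<forall>c x y. s c (x + y) = s c x + s c y) \<and> (\<forall>c d x. s (c + d) x = s c x + s d x)
     \<and> (\<forall>c d x. s c (s d x) = s (c * d) x) \<and> (\<forall>x. s 1 x = x)
     \<and> (\<forall>c x y. s c (x * y) = s c x * y)"

definition klinear :: "('k \<Rightarrow> 'x \<Rightarrow> 'x) \<Rightarrow> ('k \<Rightarrow> 'y \<Rightarrow> 'y) \<Rightarrow> ('x::plus \<Rightarrow> 'y::plus) \<Rightarrow> bool" where
  "klinear s1 s2 f \<longleftrightarrow> (\<forall>x y. f (x + y) = f x + f y) \<and> (\<forall>c x. f (s1 c x) = s2 c (f x))"

definition involution :: "('k \<Rightarrow> 'x \<Rightarrow> 'x) \<Rightarrow> ('x::comm_ring_1 \<Rightarrow> 'x) \<Rightarrow> bool" where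
  "involution s d \<longleftrightarrow> klinear s s d \<and> (\<forall>x. d (d x) = x) \<and> (\<forall>x y. d (x * y) = d y * d x)"

definition rq_op :: "('k \<Rightarrow> 'x \<Rightarrow> 'x) \<Rightarrow> 'k rq \<Rightarrow> ('x::comm_ring_1 \<Rightarrow> 'x) \<Rightarrow> bool" where
  "rq_op s q P \<longleftrightarrow> (\<forall>x y. P x * P y = P (P x * y + x * P y) +
      (case q of RTheta \<theta> \<Rightarrow> s \<theta> (P (x * y))
               | RNij \<Rightarrow> - P (P (x * y))
               | RTD \<Rightarrow> - P (x * P 1 * y)))"

definition comm_rq_algebra :: "('k::field \<Rightarrow> 'x \<Rightarrow> 'x) \<Rightarrow> ('x::comm_ring_1 \<Rightarrow> 'x) \<Rightarrow> 'k rq \<Rightarrow> bool" where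
  "comm_rq_algebra s P q \<longleftrightarrow> kalg s \<and> klinear s s P \<and> rq_op s q P"

definition inv_comm_rq_algebra ::
  "('k::field \<Rightarrow> 'x \<Rightarrow> 'x) \<Rightarrow> ('x::comm_ring_1 \<Rightarrow> 'x) \<Rightarrow> 'k rq \<Rightarrow> ('x \<Rightarrow> 'x) \<Rightarrow> bool" where
  "inv_comm_rq_algebra s P q d \<longleftrightarrow> comm_rq_algebra s P q \<and> involution s d \<and> (\<forall>x. P (d x) = d (P x))"

definition alg_hom :: "('k \<Rightarrow> 'a \<Rightarrow> 'a) \<Rightarrow> ('k \<Rightarrow> 'x \<Rightarrow> 'x) \<Rightarrow> ('a::comm_ring_1 \<Rightarrow> 'x::comm_ring_1) \<Rightarrow> bool" where
  "alg_hom sA sX f \<longleftrightarrow> klinear sA sX f \<and> f 1 = 1 \<and> (\<forall>x y. f (x * y) = f x * f y)"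

section \<open>The tensor algebra, modelled as formal K-linear combinations of words over A
  modulo the multilinearity relations\<close>

text \<open>A formal combination of words: a finitely supported function  'a list => 'k.
  The word [a1,...,an] stands for the pure tensor a1 (x) ... (x) an; [] stands for 1_K.\<close>

definition supp :: "('a list \<Rightarrow> 'k::zero) \<Rightarrow> 'a list set" where
  "supp F = {xs. F xs \<noteq> 0}"

definition FS :: "('a list \<Rightarrow> 'k::zero) set" where
  "FS = {F. finite (supp F)}"

text \<open>Representatives of T^+(A) = A (x) T(A): combinations of nonempty words.\<close>
definition TP :: "('a list \<Rightarrow> 'k::zero) set" where
  "TP = {F \<in> FS. F [] = 0}"

definition wsingle :: "'a list \<Rightarrow> ('a list \<Rightarrow> 'k::{zero,one})" where
  "wsingle xs = (\<lambda>ys. if ys = xs then 1 else 0)"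

definition fsc :: "'k::times \<Rightarrow> ('a list \<Rightarrow> 'k) \<Rightarrow> ('a list \<Rightarrow> 'k)" where
  "fsc c F = (\<lambda>xs. c * F xs)"

text \<open>pre a F = a (x) F  (linear in F).\<close>
definition pre :: "'a \<Rightarrow> ('a list \<Rightarrow> 'k::zero) \<Rightarrow> ('a list \<Rightarrow> 'k)" where
  "pre a F = (\<lambda>xs. case xs of [] \<Rightarrow> 0 | y # ys \<Rightarrow> if y = a then F ys else 0)"

fun sh :: "'k rq \<Rightarrow> 'a::comm_ring_1 list \<Rightarrow> 'a list \<Rightarrow> ('a list \<Rightarrow> 'k::field)" where
  "sh q [] V = wsingle V"
| "sh q (a # U) [] = wsingle (a # U)"
| "sh q (a # U) (b # V) = pre a (sh q U (b # V)) + pre b (sh q (a # U) V) +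
     (case q of RTheta \<theta> \<Rightarrow> fsc \<theta> (pre (a * b) (sh q U V))
              | RNij \<Rightarrow> - pre 1 (pre (a * b) (sh q U V))
              | RTD \<Rightarrow> - pre (a * b) (pre 1 (sh q U V)))"

fun shbar :: "'k rq \<Rightarrow> 'a::comm_ring_1 list \<Rightarrow> 'a list \<Rightarrow> ('a list \<Rightarrow> 'k::field)" where
  "shbar q (a # U) (b # V) = pre (a * b) (sh q U V)"
| "shbar q _ _ = 0"

definition pmul :: "'k rq \<Rightarrow> ('a::comm_ring_1 list \<Rightarrow> 'k::field) \<Rightarrow> ('a list \<Rightarrow> 'k) \<Rightarrow> ('a list \<Rightarrow> 'k)" where
  "pmul q F G = (\<Sum>u\<in>supp F. \<Sum>v\<in>supp G. fsc (F u * G v) (shbar q u v))"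

definition punit :: "'a::comm_ring_1 list \<Rightarrow> 'k::field" where
  "punit = wsingle [1]"

definition PA :: "('a::comm_ring_1 list \<Rightarrow> 'k::zero) \<Rightarrow> ('a list \<Rightarrow> 'k)" where
  "PA F = pre 1 F"

definition iA :: "'a \<Rightarrow> ('a list \<Rightarrow> 'k::{zero,one})" where
  "iA a = wsingle [a]"

definition tdag :: "('a \<Rightarrow> 'a) \<Rightarrow> ('a list \<Rightarrow> 'k::field) \<Rightarrow> ('a list \<Rightarrow> 'k)" where
  "tdag d F = (\<Sum>u\<in>supp F. fsc (F u) (wsingle (map d u)))"

inductive_set NR :: "('k::field \<Rightarrow> 'a \<Rightarrow> 'a) \<Rightarrow> ('a::plus list \<Rightarrow> 'k) set" for s where
  zero: "0 \<in> NR s"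
| add: "F \<in> NR s \<Longrightarrow> G \<in> NR s \<Longrightarrow> F + G \<in> NR s"
| scale: "F \<in> NR s \<Longrightarrow> fsc c F \<in> NR s"
| rel_scale: "wsingle (u @ [s c a] @ v) - fsc c (wsingle (u @ [a] @ v)) \<in> NR s"
| rel_add: "wsingle (u @ [a + b] @ v) - wsingle (u @ [a] @ v) - wsingle (u @ [b] @ v) \<in> NR s"

definition teq :: "('k::field \<Rightarrow> 'a \<Rightarrow> 'a) \<Rightarrow> ('a::plus list \<Rightarrow> 'k) \<Rightarrow> ('a list \<Rightarrow> 'k) \<Rightarrow> bool" where
  "teq s F G \<longleftrightarrow> F - G \<in> NR s"

definition tplus_inv_comm_rq :: "('k::field \<Rightarrow> 'a \<Rightarrow> 'a) \<Rightarrow> ('a::comm_ring_1 \<Rightarrow> 'a) \<Rightarrow> 'k rq \<Rightarrow> bool" where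
  "tplus_inv_comm_rq s d q \<longleftrightarrow>
    \<comment> \<open>the operations are well defined on the quotient\<close>
    NR s \<subseteq> (TP::('a list \<Rightarrow> 'k) set) \<and> (punit::'a list \<Rightarrow> 'k) \<in> TP
    \<and> (\<forall>F\<in>(TP::('a list \<Rightarrow> 'k) set). \<forall>G\<in>(TP::('a list \<Rightarrow> 'k) set). F + G \<in> TP \<and> pmul q F G \<in> TP)
    \<and> (\<forall>c::'k. \<forall>F\<in>(TP::('a list \<Rightarrow> 'k) set). fsc c F \<in> TP) \<and> (\<forall>F\<in>(TP::('a list \<Rightarrow> 'k) set). PA F \<in> TP \<and> tdag d F \<in> TP)
    \<and> (\<forall>F\<in>NR s. \<forall>G\<in>(TP::('a list \<Rightarrow> 'k) set). pmul q F G \<in> NR s \<and> pmul q G F \<in> NR s)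
    \<and> (\<forall>F\<in>NR s. PA F \<in> NR s \<and> tdag d F \<in> NR s)
    \<comment> \<open>commutative unital K-algebra\<close>
    \<and> (\<forall>F\<in>(TP::('a list \<Rightarrow> 'k) set). \<forall>G\<in>(TP::('a list \<Rightarrow> 'k) set). \<forall>H\<in>(TP::('a list \<Rightarrow> 'k) set). teq s (pmul q (pmul q F G) H) (pmul q F (pmul q G H)))
    \<and> (\<forall>F\<in>(TP::('a list \<Rightarrow> 'k) set). \<forall>G\<in>(TP::('a list \<Rightarrow> 'k) set). teq s (pmul q F G) (pmul q G F))
    \<and> (\<forall>F\<in>(TP::('a list \<Rightarrow> 'k) set). teq s (pmul q punit F) F)
    \<and> (\<forall>F\<in>(TP::('a list \<Rightarrow> 'k) set). \<forall>G\<in>(TP::('a list \<Rightarrow> 'k) set). \<forall>H\<in>(TP::('a list \<Rightarrow> 'k) set). teq s (pmul q F (G + H)) (pmul q F G + pmul q F H))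
    \<and> (\<forall>c::'k. \<forall>F\<in>(TP::('a list \<Rightarrow> 'k) set). \<forall>G\<in>(TP::('a list \<Rightarrow> 'k) set). teq s (pmul q (fsc c F) G) (fsc c (pmul q F G)))
    \<comment> \<open>P_A is linear and satisfies the R_q identity\<close>
    \<and> (\<forall>F\<in>(TP::('a list \<Rightarrow> 'k) set). \<forall>G\<in>(TP::('a list \<Rightarrow> 'k) set). teq s (PA (F + G)) (PA F + PA G))
    \<and> (\<forall>c::'k. \<forall>F\<in>(TP::('a list \<Rightarrow> 'k) set). teq s (PA (fsc c F)) (fsc c (PA F)))
    \<and> (\<forall>F\<in>(TP::('a list \<Rightarrow> 'k) set). \<forall>G\<in>(TP::('a list \<Rightarrow> 'k) set). teq s (pmul q (PA F) (PA G))
          (PA (pmul q (PA F) G + pmul q F (PA G)) +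
           (case q of RTheta \<theta> \<Rightarrow> fsc \<theta> (PA (pmul q F G))
                    | RNij \<Rightarrow> - PA (PA (pmul q F G))
                    | RTD \<Rightarrow> - PA (pmul q (pmul q F (PA punit)) G))))
    \<comment> \<open>dag is an involution commuting with P_A\<close>
    \<and> (\<forall>F\<in>(TP::('a list \<Rightarrow> 'k) set). \<forall>G\<in>(TP::('a list \<Rightarrow> 'k) set). teq s (tdag d (F + G)) (tdag d F + tdag d G))
    \<and> (\<forall>c::'k. \<forall>F\<in>(TP::('a list \<Rightarrow> 'k) set). teq s (tdag d (fsc c F)) (fsc c (tdag d F)))
    \<and> (\<forall>F\<in>(TP::('a list \<Rightarrow> 'k) set). teq s (tdag d (tdag d F)) F)
    \<and> (\<forall>F\<in>(TP::('a list \<Rightarrow> 'k) set). \<forall>G\<in>(TP::('a list \<Rightarrow> 'k) set). teq s (tdag d (pmul q F G)) (pmul q (tdag d G) (tdag d F)))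
    \<and> (\<forall>F\<in>(TP::('a list \<Rightarrow> 'k) set). teq s (PA (tdag d F)) (tdag d (PA F)))"

text \<open>An R_q-algebra morphism T^+(A) -> X, given as a map on representatives that
  vanishes on the relations (i.e. descends to the quotient).\<close>
definition tplus_rq_mor :: "('k::field \<Rightarrow> 'a \<Rightarrow> 'a) \<Rightarrow> 'k rq \<Rightarrow> ('k \<Rightarrow> 'x \<Rightarrow> 'x) \<Rightarrow> ('x::comm_ring_1 \<Rightarrow> 'x)
    \<Rightarrow> (('a::comm_ring_1 list \<Rightarrow> 'k) \<Rightarrow> 'x) \<Rightarrow> bool" where
  "tplus_rq_mor s q sX PX \<Phi> \<longleftrightarrow>
    (\<forall>F\<in>NR s. \<Phi> F = 0)
    \<and> (\<forall>F\<in>TP. \<forall>G\<in>TP. \<Phi> (F + G) = \<Phi> F + \<Phi> G)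
    \<and> (\<forall>c. \<forall>F\<in>TP. \<Phi> (fsc c F) = sX c (\<Phi> F))
    \<and> \<Phi> punit = 1
    \<and> (\<forall>F\<in>TP. \<forall>G\<in>TP. \<Phi> (pmul q F G) = \<Phi> F * \<Phi> G)
    \<and> (\<forall>F\<in>TP. \<Phi> (PA F) = PX (\<Phi> F))"

end

theory Submission imports Defs begin

lemma fun_sum_apply: "(\<Sum>u\<in>S. f u) x = (\<Sum>u\<in>S. f u x)"
  by (induct S rule: infinite_finite_induct) auto

lemma fsc_apply[simp]: "fsc c F xs = c * F xs" by (simp add: fsc_def)
lemma wsingle_apply: "wsingle u xs = (if xs = u then 1 else 0)" by (simp add: wsingle_def)
lemma supp_iff[simp]: "u \<in> supp F \<longleftrightarrow> F u \<noteq> 0" by (simp add: supp_def)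
lemma FS_iff: "F \<in> FS \<longleftrightarrow> finite (supp F)" by (simp add: FS_def)
lemma TP_iff: "F \<in> TP \<longleftrightarrow> F \<in> FS \<and> F [] = 0" by (simp add: TP_def)

lemma supp_ws: "supp (wsingle u :: _ \<Rightarrow> 'k::field) = {u}"
  by (auto simp: supp_def wsingle_def)

lemma FS_0[simp]: "0 \<in> FS" by (simp add: FS_iff supp_def)
lemma FS_add[simp]: "F \<in> FS \<Longrightarrow> G \<in> FS \<Longrightarrow> (F + G :: _ \<Rightarrow> 'k::field) \<in> FS"
  unfolding FS_iff by (rule finite_subset[of _ "supp F \<union> supp G"]) (auto simp: supp_def)
lemma FS_neg[simp]: "F \<in> FS \<Longrightarrow> (- F :: _ \<Rightarrow> 'k::field) \<in> FS"
  unfolding FS_iff by (rule finite_subset[of _ "supp F"]) (auto simp: supp_def)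
lemma FS_diff[simp]: "F \<in> FS \<Longrightarrow> G \<in> FS \<Longrightarrow> (F - G :: _ \<Rightarrow> 'k::field) \<in> FS"
  using FS_add[of F "-G"] by simp
lemma FS_fsc[simp]: "F \<in> FS \<Longrightarrow> (fsc c F :: _ \<Rightarrow> 'k::field) \<in> FS"
  unfolding FS_iff by (rule finite_subset[of _ "supp F"]) (auto simp: supp_def)
lemma FS_ws[simp]: "(wsingle u :: _ \<Rightarrow> 'k::field) \<in> FS"
  by (simp add: FS_iff supp_ws)
lemma FS_sum: "finite S \<Longrightarrow> (\<And>u. u \<in> S \<Longrightarrow> f u \<in> FS) \<Longrightarrow> (\<Sum>u\<in>S. f u :: _ \<Rightarrow> 'k::field) \<in> FS"
  by (induct S rule: finite_induct) auto
lemma pre_Nil[simp]: "pre a F [] = 0" by (simp add: pre_def)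
lemma pre_Cons[simp]: "pre a F (y # ys) = (if y = a then F ys else 0)" by (simp add: pre_def)
lemma supp_pre: "supp (pre a F) \<subseteq> Cons a ` supp (F :: _ \<Rightarrow> 'k::field)"
proof
  fix x assume h: "x \<in> supp (pre a F)"
  show "x \<in> Cons a ` supp F"
  proof (cases x)
    case Nil then show ?thesis using h by simp
  next
    case (Cons y ys)
    with h have "y = a" "F ys \<noteq> 0" by (auto split: if_splits)
    then show ?thesis using Cons by (intro image_eqI[of _ _ ys]) auto
  qed
qed
lemma FS_pre[simp]: "F \<in> FS \<Longrightarrow> (pre a F :: _ \<Rightarrow> 'k::field) \<in> FS"
  unfolding FS_iff by (rule finite_subset[OF supp_pre]) simp


lemma fsc_add: "fsc c (F + G) = fsc c F + fsc c (G :: _ \<Rightarrow> 'k::field)" by (simp add: fun_eq_iff algebra_simps)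
lemma fsc_add2: "fsc (c + d) F = fsc c F + fsc d (F :: _ \<Rightarrow> 'k::field)" by (simp add: fun_eq_iff algebra_simps)
lemma fsc_fsc: "fsc c (fsc d F) = fsc (c * d) (F :: _ \<Rightarrow> 'k::field)" by (simp add: fun_eq_iff algebra_simps)
lemma fsc_1[simp]: "fsc 1 (F :: _ \<Rightarrow> 'k::field) = F" by (simp add: fun_eq_iff)
lemma fsc_0[simp]: "fsc 0 (F :: _ \<Rightarrow> 'k::field) = 0" by (simp add: fun_eq_iff)
lemma fsc_zero[simp]: "fsc c (0 :: _ \<Rightarrow> 'k::field) = 0" by (simp add: fun_eq_iff)
lemma fsc_neg: "fsc c (- F :: _ \<Rightarrow> 'k::field) = - fsc c F" by (simp add: fun_eq_iff)
lemma fsc_diff: "fsc c (F - G :: _ \<Rightarrow> 'k::field) = fsc c F - fsc c G" by (simp add: fun_eq_iff algebra_simps)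

lemma pre_add: "pre a (F + G) = pre a F + pre a (G :: _ \<Rightarrow> 'k::field)"
  by (simp add: fun_eq_iff pre_def split: list.splits)
lemma pre_neg: "pre a (- F :: _ \<Rightarrow> 'k::field) = - pre a F"
  by (simp add: fun_eq_iff pre_def split: list.splits)
lemma pre_diff: "pre a (F - G :: _ \<Rightarrow> 'k::field) = pre a F - pre a G"
  by (simp add: fun_eq_iff pre_def split: list.splits)
lemma pre_fsc: "pre a (fsc c F :: _ \<Rightarrow> 'k::field) = fsc c (pre a F)"
  by (simp add: fun_eq_iff pre_def split: list.splits)
lemma pre_zero[simp]: "pre a (0 :: _ \<Rightarrow> 'k::field) = 0"
  by (simp add: fun_eq_iff pre_def split: list.splits)
lemma pre_ws: "pre a (wsingle u) = (wsingle (a # u) :: _ \<Rightarrow> 'k::field)"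
  by (simp add: fun_eq_iff pre_def wsingle_def split: list.splits)

definition kmod :: "('k::field \<Rightarrow> 'x::ab_group_add \<Rightarrow> 'x) \<Rightarrow> bool" where
  "kmod sc \<longleftrightarrow> (\<forall>c x y. sc c (x + y) = sc c x + sc c y) \<and> (\<forall>c d x. sc (c + d) x = sc c x + sc d x)
     \<and> (\<forall>c d x. sc c (sc d x) = sc (c * d) x) \<and> (\<forall>x. sc 1 x = x)"

lemma kmod_fsc: "kmod (fsc :: 'k::field \<Rightarrow> ('a list \<Rightarrow> 'k) \<Rightarrow> _)"
  by (simp add: kmod_def fsc_add fsc_add2 fsc_fsc)

lemma kmod_kalg: "kalg s \<Longrightarrow> kmod s"
  by (simp add: kmod_def kalg_def)

context
  fixes sc :: "'k::field \<Rightarrow> 'x::ab_group_add \<Rightarrow> 'x"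
  assumes km: "kmod sc"
begin
lemma km_add: "sc c (x + y) = sc c x + sc c y" using km by (simp add: kmod_def)
lemma km_add2: "sc (c + d) x = sc c x + sc d x" using km by (simp add: kmod_def)
lemma km_sc: "sc c (sc d x) = sc (c * d) x" using km by (simp add: kmod_def)
lemma km_1: "sc 1 x = x" using km by (simp add: kmod_def)
lemma km_0c: "sc 0 x = 0" using km_add2[of 0 0 x] by simp
lemma km_0: "sc c 0 = 0" using km_add[of c 0 0] by simp
lemma km_neg: "sc c (- x) = - sc c x"
  using km_add[of c x "-x"] km_0 by (metis add.right_inverse minus_unique)
lemma km_diff: "sc c (x - y) = sc c x - sc c y"
  using km_add[of c x "-y"] km_neg by simp
lemma km_sum: "sc c (\<Sum>u\<in>S. f u) = (\<Sum>u\<in>S. sc c (f u))"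
  by (induct S rule: infinite_finite_induct) (auto simp: km_0 km_add)
end

definition linS :: "('k::zero \<Rightarrow> 'x \<Rightarrow> 'x) \<Rightarrow> ('a list \<Rightarrow> 'x) \<Rightarrow> ('a list \<Rightarrow> 'k) \<Rightarrow> 'x::comm_monoid_add" where
  "linS sc f F = (\<Sum>u\<in>supp F. sc (F u) (f u))"

abbreviation lin :: "('a list \<Rightarrow> ('b list \<Rightarrow> 'k)) \<Rightarrow> ('a list \<Rightarrow> 'k) \<Rightarrow> ('b list \<Rightarrow> 'k::field)" where
  "lin \<equiv> linS fsc"

context
  fixes sc :: "'k::field \<Rightarrow> 'x::ab_group_add \<Rightarrow> 'x"
  assumes km: "kmod sc"
begin

lemma linS_superset: "finite S \<Longrightarrow> supp F \<subseteq> S \<Longrightarrow> linS sc f F = (\<Sum>u\<in>S. sc (F u) (f u))"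
  unfolding linS_def by (rule sum.mono_neutral_left) (auto simp: km_0c[OF km])

lemma linS_add: "F \<in> FS \<Longrightarrow> G \<in> FS \<Longrightarrow> linS sc f (F + G) = linS sc f F + linS sc f G"
proof -
  assume a: "F \<in> FS" "G \<in> FS"
  let ?S = "supp F \<union> supp G"
  have f: "finite ?S" using a by (simp add: FS_iff)
  have "linS sc f (F + G) = (\<Sum>u\<in>?S. sc ((F+G) u) (f u))"
    by (rule linS_superset[OF f]) (auto simp: supp_def)
  also have "\<dots> = (\<Sum>u\<in>?S. sc (F u) (f u)) + (\<Sum>u\<in>?S. sc (G u) (f u))"
    by (simp add: km_add2[OF km] sum.distrib)
  also have "\<dots> = linS sc f F + linS sc f G"
    by (simp add: linS_superset[OF f])
  finally show ?thesis .
qed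

lemma linS_fsc: "F \<in> FS \<Longrightarrow> linS sc f (fsc c F) = sc c (linS sc f F)"
proof -
  assume a: "F \<in> FS"
  have f: "finite (supp F)" using a by (simp add: FS_iff)
  have "linS sc f (fsc c F) = (\<Sum>u\<in>supp F. sc (fsc c F u) (f u))"
    by (rule linS_superset[OF f]) (auto simp: supp_def)
  also have "\<dots> = (\<Sum>u\<in>supp F. sc (c * F u) (f u))" by simp
  also have "\<dots> = sc c (linS sc f F)"
    by (simp add: linS_def km_sum[OF km] km_sc[OF km])
  finally show ?thesis .
qed

lemma linS_zero[simp]: "linS sc f 0 = 0"
  by (simp add: linS_def supp_def)

lemma linS_neg: "F \<in> FS \<Longrightarrow> linS sc f (- F) = - linS sc f F"
  using linS_add[of F "-F" f] linS_zero by (metis FS_neg add.right_inverse minus_unique)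

lemma linS_diff: "F \<in> FS \<Longrightarrow> G \<in> FS \<Longrightarrow> linS sc f (F - G) = linS sc f F - linS sc f G"
  using linS_add[of F "-G" f] linS_neg[of G f] by simp

lemma linS_ws[simp]: "linS sc f (wsingle u) = f u"
  unfolding linS_def supp_ws by (simp add: wsingle_def km_1[OF km])

lemma linS_fadd: "linS sc (\<lambda>u. f u + g u) F = linS sc f F + linS sc g F"
  by (simp add: linS_def km_add[OF km] sum.distrib)

lemma linS_ffsc: "linS sc (\<lambda>u. sc c (f u)) F = sc c (linS sc f F)"
  by (simp add: linS_def km_sum[OF km] km_sc[OF km] mult.commute)

lemma linS_fneg: "linS sc (\<lambda>u. - f u) F = - linS sc f F"
  by (simp add: linS_def km_neg[OF km] sum_negf)

lemma linS_fdiff: "linS sc (\<lambda>u. f u - g u) F = linS sc f F - linS sc g F"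
  by (simp add: linS_def km_diff[OF km] sum_subtractf)

lemma linS_fzero[simp]: "linS sc (\<lambda>u. 0) F = 0"
  by (simp add: linS_def km_0[OF km])

lemma linS_cong: "(\<And>u. u \<in> supp F \<Longrightarrow> f u = g u) \<Longrightarrow> linS sc f F = linS sc g F"
  by (simp add: linS_def)

end

lemma hom_sum:
  fixes L :: "'x::ab_group_add \<Rightarrow> 'y::ab_group_add"
  assumes add: "\<And>x y. x \<in> D \<Longrightarrow> y \<in> D \<Longrightarrow> L (x + y) = L x + L y"
    and cl: "\<And>x y. x \<in> D \<Longrightarrow> y \<in> D \<Longrightarrow> x + y \<in> D" and z: "0 \<in> D"
  shows "finite S \<Longrightarrow> (\<And>u. u \<in> S \<Longrightarrow> g u \<in> D) \<Longrightarrow> L (sum g S) = (\<Sum>u\<in>S. L (g u)) \<and> sum g S \<in> D"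
proof (induct S rule: finite_induct)
  case empty
  have "L 0 = 0" using add[OF z z] by simp
  then show ?case using z by simp
next
  case (insert x F)
  then have IH: "L (sum g F) = (\<Sum>u\<in>F. L (g u))" "sum g F \<in> D" and gx: "g x \<in> D" by auto
  have "L (sum g (insert x F)) = L (g x + sum g F)" using insert.hyps by simp
  also have "\<dots> = L (g x) + L (sum g F)" using add gx IH(2) by blast
  finally show ?case using IH insert.hyps cl gx by simp
qed

lemma linS_hom:
  fixes L :: "'x::ab_group_add \<Rightarrow> 'y::ab_group_add"
  assumes km2: "kmod sc2"
    and add: "\<And>x y. x \<in> D \<Longrightarrow> y \<in> D \<Longrightarrow> L (x + y) = L x + L y"
    and hsc: "\<And>c x. x \<in> D \<Longrightarrow> L (sc1 c x) = sc2 c (L x)"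
    and cl: "\<And>x y. x \<in> D \<Longrightarrow> y \<in> D \<Longrightarrow> x + y \<in> D" and clsc: "\<And>c x. x \<in> D \<Longrightarrow> sc1 c x \<in> D"
    and z: "0 \<in> D" and fD: "\<And>u. u \<in> supp F \<Longrightarrow> f u \<in> D"
  shows "L (linS sc1 f F) = linS sc2 (\<lambda>u. L (f u)) F"
proof (cases "finite (supp F)")
  case True
  have g: "\<And>u. u \<in> supp F \<Longrightarrow> sc1 (F u) (f u) \<in> D" using fD clsc by blast
  have "L (\<Sum>u\<in>supp F. sc1 (F u) (f u)) = (\<Sum>u\<in>supp F. L (sc1 (F u) (f u)))"
    using hom_sum[of D L, OF add cl z True g] by (rule conjunct1)
  also have "\<dots> = (\<Sum>u\<in>supp F. sc2 (F u) (L (f u)))"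
    by (rule sum.cong) (simp_all add: hsc fD)
  finally show ?thesis by (simp add: linS_def)
next
  case False
  have "L 0 = 0" using add[OF z z] by simp
  then show ?thesis using False by (simp add: linS_def)
qed

lemma lin_apply: "lin f F xs = (\<Sum>u\<in>supp F. F u * f u xs)"
  by (simp add: linS_def fun_sum_apply)

lemma lin_ws_id: "F \<in> FS \<Longrightarrow> lin wsingle F = F"
proof (rule ext)
  fix xs assume "F \<in> FS"
  then have f: "finite (supp F)" by (simp add: FS_iff)
  have "lin wsingle F xs = (\<Sum>u\<in>supp F. if u = xs then F u else 0)"
    unfolding lin_apply by (rule sum.cong) (auto simp: wsingle_def)
  also have "\<dots> = F xs" using f by (simp add: sum.delta)
  finally show "lin wsingle F xs = F xs" .
qed

lemma FS_lin: "(\<And>u. u \<in> supp F \<Longrightarrow> f u \<in> FS) \<Longrightarrow> (lin f F :: _ \<Rightarrow> 'k::field) \<in> FS"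
  unfolding linS_def by (cases "finite (supp F)") (auto intro!: FS_sum)


declare plus_fun_apply[simp del] fsc_apply[simp del] times_fun_apply[simp del] minus_apply[simp del]
  uminus_apply[simp del] zero_fun_apply[simp del]
lemmas fapp = plus_fun_apply fsc_apply times_fun_apply minus_apply uminus_apply zero_fun_apply

lemma fsc_m1: "fsc (-1) F = - (F :: _ \<Rightarrow> 'k::field)" by (simp add: fun_eq_iff fapp)

definition linop :: "(('a list \<Rightarrow> 'k::field) \<Rightarrow> ('b list \<Rightarrow> 'k)) \<Rightarrow> bool" where
  "linop L \<longleftrightarrow> (\<forall>x\<in>FS. \<forall>y\<in>FS. L (x + y) = L x + L y) \<and> (\<forall>c. \<forall>x\<in>FS. L (fsc c x) = fsc c (L x))
     \<and> (\<forall>x\<in>FS. L x \<in> FS)"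

lemma linopD:
  assumes "linop L"
  shows "x \<in> FS \<Longrightarrow> y \<in> FS \<Longrightarrow> L (x + y) = L x + L y" "x \<in> FS \<Longrightarrow> L (fsc c x) = fsc c (L x)"
    "x \<in> FS \<Longrightarrow> L x \<in> FS"
  using assms by (auto simp: linop_def)

lemma linopI:
  assumes "\<And>x y. x \<in> FS \<Longrightarrow> y \<in> FS \<Longrightarrow> L (x + y) = L x + L y"
    "\<And>c x. x \<in> FS \<Longrightarrow> L (fsc c x) = fsc c (L x)" "\<And>x. x \<in> FS \<Longrightarrow> L x \<in> FS"
  shows "linop L"
  using assms by (auto simp: linop_def)

lemma linop_0: "linop L \<Longrightarrow> L 0 = 0"
  using linopD(1)[of L 0 0] by simp

lemma linop_neg: "linop L \<Longrightarrow> x \<in> FS \<Longrightarrow> L (- x) = - L x"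
  using linopD(2)[of L x "-1"] by (simp add: fsc_m1)

lemma linop_diff: "linop L \<Longrightarrow> x \<in> FS \<Longrightarrow> y \<in> FS \<Longrightarrow> L (x - y) = L x - L y"
  using linopD(1)[of L x "-y"] linop_neg[of L y] by simp

lemma linop_lin:
  assumes "linop L" "\<And>u. u \<in> supp F \<Longrightarrow> f u \<in> FS"
  shows "L (lin f F) = lin (\<lambda>u. L (f u)) F"
  by (rule linS_hom[OF kmod_fsc, where D=FS, OF linopD(1)[OF assms(1)] linopD(2)[OF assms(1)] FS_add FS_fsc FS_0 assms(2)])

lemma linop_expand: "linop L \<Longrightarrow> F \<in> FS \<Longrightarrow> L F = lin (\<lambda>u. L (wsingle u)) F"
  using linop_lin[of L F wsingle] lin_ws_id[of F] by simp

lemma lin_ext: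
  assumes "linop L1" "linop L2" "F \<in> FS" "\<And>u. u \<in> supp F \<Longrightarrow> L1 (wsingle u) = L2 (wsingle u)"
  shows "L1 F = L2 F"
proof -
  have "L1 F = lin (\<lambda>u. L1 (wsingle u)) F" by (rule linop_expand) (fact assms)+
  also have "\<dots> = lin (\<lambda>u. L2 (wsingle u)) F" by (rule linS_cong[OF kmod_fsc]) (rule assms(4))
  also have "\<dots> = L2 F" by (rule linop_expand[symmetric]) (fact assms)+
  finally show ?thesis .
qed

lemma linop_id: "linop (\<lambda>x. x)" by (rule linopI) auto
lemma linop_comp: "linop L1 \<Longrightarrow> linop L2 \<Longrightarrow> linop (\<lambda>x. L1 (L2 x))"
  by (rule linopI) (auto simp: linopD)
lemma linop_add: "linop L1 \<Longrightarrow> linop L2 \<Longrightarrow> linop (\<lambda>x. L1 x + L2 x)"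
  by (rule linopI) (auto simp: linopD fsc_add)
lemma linop_fscL: "linop L \<Longrightarrow> linop (\<lambda>x. fsc c (L x))"
  by (rule linopI) (auto simp: linopD fsc_add fsc_fsc mult.commute)
lemma linop_negL: "linop L \<Longrightarrow> linop (\<lambda>x. - L x)"
  by (rule linopI) (auto simp: linopD fsc_neg)
lemma linop_pre: "linop (pre a :: ('a list \<Rightarrow> 'k::field) \<Rightarrow> _)"
  by (rule linopI) (auto simp: pre_add pre_fsc)
lemma linop_linmap: "(\<And>u. f u \<in> FS) \<Longrightarrow> linop (lin f)"
  by (rule linopI) (auto simp: linS_add[OF kmod_fsc] linS_fsc[OF kmod_fsc] intro!: FS_lin)

lemma pre_lin: "F \<in> FS \<Longrightarrow> pre a F = lin (\<lambda>u. wsingle (a # u)) (F :: _ \<Rightarrow> 'k::field)"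
  using linop_expand[OF linop_pre, of F a] by (simp add: pre_ws)

definition bilop :: "(('a list \<Rightarrow> 'k::field) \<Rightarrow> ('b list \<Rightarrow> 'k) \<Rightarrow> ('c list \<Rightarrow> 'k)) \<Rightarrow> bool" where
  "bilop B \<longleftrightarrow> (\<forall>y\<in>FS. linop (\<lambda>x. B x y)) \<and> (\<forall>x\<in>FS. linop (B x))"

lemma bilopD: "bilop B \<Longrightarrow> y \<in> FS \<Longrightarrow> linop (\<lambda>x. B x y)" "bilop B \<Longrightarrow> x \<in> FS \<Longrightarrow> linop (B x)"
  by (auto simp: bilop_def)

lemma bilop_FS: "bilop B \<Longrightarrow> x \<in> FS \<Longrightarrow> y \<in> FS \<Longrightarrow> B x y \<in> FS"
  using bilopD(2) linopD(3) by blast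

lemma bil_ext:
  assumes "bilop B1" "bilop B2" "F \<in> FS" "G \<in> FS"
    "\<And>u v. u \<in> supp F \<Longrightarrow> v \<in> supp G \<Longrightarrow> B1 (wsingle u) (wsingle v) = B2 (wsingle u) (wsingle v)"
  shows "B1 F G = B2 F G"
proof (rule lin_ext[of "\<lambda>x. B1 x G" "\<lambda>x. B2 x G"])
  show "linop (\<lambda>x. B1 x G)" "linop (\<lambda>x. B2 x G)" using assms bilopD by auto
  show "F \<in> FS" by fact
  fix u assume u: "u \<in> supp F"
  show "B1 (wsingle u) G = B2 (wsingle u) G"
    by (rule lin_ext[of "B1 (wsingle u)" "B2 (wsingle u)"]) (use assms u bilopD(2)[OF assms(1) FS_ws] bilopD(2)[OF assms(2) FS_ws] in auto)
qed

definition bil :: "('a list \<Rightarrow> 'b list \<Rightarrow> ('c list \<Rightarrow> 'k)) \<Rightarrow> ('a list \<Rightarrow> 'k) \<Rightarrow> ('b list \<Rightarrow> 'k) \<Rightarrow> ('c list \<Rightarrow> 'k::field)" where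
  "bil b F G = lin (\<lambda>u. lin (\<lambda>v. b u v) G) F"

lemma bilop_bil:
  fixes b :: "'a list \<Rightarrow> 'b list \<Rightarrow> ('c list \<Rightarrow> 'k::field)"
  assumes b: "\<And>u v. b u v \<in> FS"
  shows "bilop (bil b)"
  unfolding bilop_def
proof (intro conjI ballI)
  fix y :: "'b list \<Rightarrow> 'k" assume y: "y \<in> FS"
  show "linop (\<lambda>x. bil b x y)" unfolding bil_def
    by (rule linop_linmap) (simp add: FS_lin b)
next
  fix x :: "'a list \<Rightarrow> 'k" assume x: "x \<in> FS"
  show "linop (bil b x)"
  proof (rule linopI)
    fix y1 y2 :: "'b list \<Rightarrow> 'k" assume "y1 \<in> FS" "y2 \<in> FS"
    then show "bil b x (y1 + y2) = bil b x y1 + bil b x y2"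
      by (simp add: bil_def linS_add[OF kmod_fsc] linS_fadd[OF kmod_fsc])
  next
    fix c and y :: "'b list \<Rightarrow> 'k" assume "y \<in> FS"
    then show "bil b x (fsc c y) = fsc c (bil b x y)"
      by (simp add: bil_def linS_fsc[OF kmod_fsc] linS_ffsc[OF kmod_fsc])
  next
    fix y :: "'b list \<Rightarrow> 'k"
    show "bil b x y \<in> FS" unfolding bil_def by (rule FS_lin) (simp add: FS_lin b)
  qed
qed

lemma bil_ws[simp]: "bil b (wsingle u) (wsingle v) = b u v"
  by (simp add: bil_def linS_ws[OF kmod_fsc])

lemma bilop_add: "bilop B1 \<Longrightarrow> bilop B2 \<Longrightarrow> bilop (\<lambda>x y. B1 x y + B2 x y)"
  by (auto simp: bilop_def intro!: linop_add)
lemma bilop_fsc: "bilop B \<Longrightarrow> bilop (\<lambda>x y. fsc c (B x y))"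
  by (auto simp: bilop_def intro!: linop_fscL)
lemma bilop_neg: "bilop B \<Longrightarrow> bilop (\<lambda>x y. - B x y)"
  by (auto simp: bilop_def intro!: linop_negL)
lemma bilop_compL: "linop L \<Longrightarrow> bilop B \<Longrightarrow> bilop (\<lambda>x y. L (B x y))"
  by (auto simp: bilop_def intro!: linop_comp[of L])
lemma bilop_compR:
  fixes L1 :: "('a list \<Rightarrow> 'k::field) \<Rightarrow> ('b list \<Rightarrow> 'k)" and L2 :: "('c list \<Rightarrow> 'k) \<Rightarrow> ('d list \<Rightarrow> 'k)"
  shows "linop L1 \<Longrightarrow> linop L2 \<Longrightarrow> bilop B \<Longrightarrow> bilop (\<lambda>x y. B (L1 x) (L2 y))"
  unfolding bilop_def
proof (intro conjI ballI)
  fix y :: "'c list \<Rightarrow> 'k" assume "linop L1" "linop L2" "(\<forall>y\<in>FS. linop (\<lambda>x. B x y)) \<and> (\<forall>x\<in>FS. linop (B x))" "y \<in> FS"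
  then show "linop (\<lambda>x. B (L1 x) (L2 y))" using linopD(3)[of L2 y] by (auto intro!: linop_comp[of "\<lambda>x. B x (L2 y)" L1])
next
  fix x :: "'a list \<Rightarrow> 'k" assume "linop L1" "linop L2" "(\<forall>y\<in>FS. linop (\<lambda>x. B x y)) \<and> (\<forall>x\<in>FS. linop (B x))" "x \<in> FS"
  then show "linop (\<lambda>y. B (L1 x) (L2 y))" using linopD(3)[of L1 x] by (auto intro!: linop_comp[of "B (L1 x)" L2])
qed
lemma bilop_swap: "bilop B \<Longrightarrow> bilop (\<lambda>x y. B y x)"
  by (auto simp: bilop_def)

section \<open>The shuffle-type products on words\<close>

definition mu :: "'k rq \<Rightarrow> 'a::comm_ring_1 \<Rightarrow> ('a list \<Rightarrow> 'k) \<Rightarrow> ('a list \<Rightarrow> 'k::field)" where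
  "mu q e Y = (case q of RTheta \<theta> \<Rightarrow> fsc \<theta> (pre e Y) | RNij \<Rightarrow> - pre 1 (pre e Y) | RTD \<Rightarrow> - pre e (pre 1 Y))"

lemma linop_mu: "linop (mu q e)"
  unfolding mu_def by (cases q) (auto intro!: linop_fscL linop_negL linop_comp[of "pre _"] linop_pre)

lemma FS_mu[simp]: "Y \<in> FS \<Longrightarrow> mu q e Y \<in> FS"
  using linopD(3)[OF linop_mu] by blast

lemma sh_rec: "sh q (a # U) (b # V) = pre a (sh q U (b # V)) + pre b (sh q (a # U) V) + mu q (a * b) (sh q U V)"
  by (cases q) (simp_all add: mu_def)

declare sh.simps(3)[simp del]

lemma sh_Nil2[simp]: "sh q U [] = wsingle U" by (cases U) auto

lemma FS_sh[simp]: "sh q U V \<in> FS"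
  apply (induct q U V rule: sh.induct)
    apply simp_all
  apply (case_tac q; simp add: sh_rec)
  done

lemma sh_comm: "sh q U V = sh q V U"
  apply (induct q U V rule: sh.induct)
    apply (simp_all add: sh_rec mult.commute add_ac)
  apply (case_tac q; simp)
  done

lemma FS_shbar[simp]: "shbar q U V \<in> FS"
  by (cases "(q, U, V)" rule: shbar.cases) simp_all

definition smul :: "'k rq \<Rightarrow> ('a::comm_ring_1 list \<Rightarrow> 'k) \<Rightarrow> ('a list \<Rightarrow> 'k) \<Rightarrow> ('a list \<Rightarrow> 'k::field)" where
  "smul q = bil (sh q)"

lemma pmul_bil: "pmul q F G = bil (shbar q) F G"
  unfolding pmul_def bil_def linS_def
  by (rule sum.cong) (simp_all add: km_sum[OF kmod_fsc] fsc_fsc)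

lemma bilop_smul: "bilop (smul q)" unfolding smul_def by (rule bilop_bil) simp
lemma bilop_pmul: "bilop (pmul q)" unfolding pmul_bil[abs_def] by (rule bilop_bil) simp

lemma smul_ws[simp]: "smul q (wsingle u) (wsingle v) = sh q u v" by (simp add: smul_def)
lemma pmul_ws[simp]: "pmul q (wsingle u) (wsingle v) = shbar q u v" by (simp add: pmul_bil)


lemma smul_add1: "F \<in> FS \<Longrightarrow> G \<in> FS \<Longrightarrow> H \<in> FS \<Longrightarrow> smul q (F + G) H = smul q F H + smul q G H"
  using linopD(1)[OF bilopD(1)[OF bilop_smul]] by blast
lemma smul_add2: "F \<in> FS \<Longrightarrow> G \<in> FS \<Longrightarrow> H \<in> FS \<Longrightarrow> smul q H (F + G) = smul q H F + smul q H G"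
  using linopD(1)[OF bilopD(2)[OF bilop_smul]] by blast
lemma smul_fsc1: "F \<in> FS \<Longrightarrow> H \<in> FS \<Longrightarrow> smul q (fsc c F) H = fsc c (smul q F H)"
  using linopD(2)[OF bilopD(1)[OF bilop_smul]] by blast
lemma smul_neg1: "F \<in> FS \<Longrightarrow> H \<in> FS \<Longrightarrow> smul q (- F) H = - smul q F H"
  using linop_neg[OF bilopD(1)[OF bilop_smul]] by blast
lemma FS_smul[simp]: "F \<in> FS \<Longrightarrow> H \<in> FS \<Longrightarrow> smul q F H \<in> FS"
  using bilop_FS[OF bilop_smul] by blast

lemma smul_unitL: "F \<in> FS \<Longrightarrow> smul q (wsingle []) F = F"
  by (rule lin_ext[OF bilopD(2)[OF bilop_smul FS_ws] linop_id]) simp_all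
lemma smul_unitR: "F \<in> FS \<Longrightarrow> smul q F (wsingle []) = F"
  by (rule lin_ext[OF bilopD(1)[OF bilop_smul FS_ws] linop_id]) simp_all

lemma smul_comm: "F \<in> FS \<Longrightarrow> G \<in> FS \<Longrightarrow> smul q F G = smul q G F"
  by (rule bil_ext[OF bilop_smul bilop_swap[OF bilop_smul]]) (simp_all add: sh_comm)

lemma smul_rec:
  assumes "F \<in> FS" "G \<in> FS"
  shows "smul q (pre a F) (pre b G) = pre a (smul q F (pre b G)) + pre b (smul q (pre a F) G) + mu q (a * b) (smul q F G)"
proof (rule bil_ext[of "\<lambda>x y. smul q (pre a x) (pre b y)"
      "\<lambda>x y. pre a (smul q x (pre b y)) + pre b (smul q (pre a x) y) + mu q (a * b) (smul q x y)"])
  show "bilop (\<lambda>x y. smul q (pre a x) (pre b y))"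
    by (rule bilop_compR[OF linop_pre linop_pre bilop_smul])
  show "bilop (\<lambda>x y. pre a (smul q x (pre b y)) + pre b (smul q (pre a x) y) + mu q (a * b) (smul q x y))"
    by (intro bilop_add bilop_compL[OF linop_pre] bilop_compL[OF linop_mu] bilop_smul
        bilop_compR[OF linop_id linop_pre bilop_smul, simplified] bilop_compR[OF linop_pre linop_id bilop_smul, simplified])
qed (use assms in \<open>simp_all add: pre_ws sh_rec\<close>)

lemma smul_TD: "F \<in> FS \<Longrightarrow> G \<in> FS \<Longrightarrow> smul RTD (pre 1 F) G = pre 1 (smul RTD F G)"
proof (rule lin_ext[of "smul RTD (pre 1 F)" "\<lambda>y. pre 1 (smul RTD F y)"])
  assume F: "F \<in> FS"
  show "linop (smul RTD (pre 1 F))" using F by (simp add: bilopD(2)[OF bilop_smul])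
  show "linop (\<lambda>y. pre 1 (smul RTD F y))" using F by (simp add: bilopD(2)[OF bilop_smul] linop_comp[OF linop_pre])
  have "smul RTD (pre 1 F) (wsingle v) = pre 1 (smul RTD F (wsingle v))" for v
  proof (induct v)
    case Nil
    then show ?case using F by (simp add: smul_unitR)
  next
    case (Cons d W)
    have "smul RTD (pre 1 F) (wsingle (d # W)) = smul RTD (pre 1 F) (pre d (wsingle W))" by (simp add: pre_ws)
    also have "\<dots> = pre 1 (smul RTD F (pre d (wsingle W))) + pre d (smul RTD (pre 1 F) (wsingle W))
        + mu RTD (1 * d) (smul RTD F (wsingle W))" using F by (simp add: smul_rec)
    also have "\<dots> = pre 1 (smul RTD F (wsingle (d # W)))" using Cons by (simp add: mu_def pre_ws)
    finally show ?case .
  qed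
  then show "\<And>u. u \<in> supp G \<Longrightarrow> smul RTD (pre 1 F) (wsingle u) = pre 1 (smul RTD F (wsingle u))" by blast
qed

definition nu :: "'k rq \<Rightarrow> 'a::comm_ring_1 \<Rightarrow> 'a \<Rightarrow> ('a list \<Rightarrow> 'k) \<Rightarrow> ('a list \<Rightarrow> 'k::field)" where
  "nu q c d Y = (case q of RTheta \<theta> \<Rightarrow> fsc (\<theta> * \<theta>) (pre (c * d) Y) | RNij \<Rightarrow> pre 1 (pre 1 (pre (c * d) Y))
      | RTD \<Rightarrow> pre (c * d) (pre 1 (pre 1 Y)))"

lemma smul_mu:
  assumes G: "G \<in> FS" and H: "H \<in> FS"
  shows "smul q (mu q e G) (pre c H) = mu q e (smul q G (pre c H)) + pre c (smul q (mu q e G) H) + nu q e c (smul q G H)"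
proof (cases q)
  case (RTheta \<theta>)
  have "smul q (mu q e G) (pre c H) = fsc \<theta> (smul q (pre e G) (pre c H))"
    using G H by (simp add: RTheta mu_def smul_fsc1)
  also have "\<dots> = fsc \<theta> (pre e (smul q G (pre c H)) + pre c (smul q (pre e G) H) + fsc \<theta> (pre (e * c) (smul q G H)))"
    using G H by (simp add: smul_rec RTheta mu_def)
  also have "\<dots> = mu q e (smul q G (pre c H)) + pre c (smul q (mu q e G) H) + nu q e c (smul q G H)"
    using G H by (simp add: RTheta mu_def nu_def fsc_add pre_fsc fsc_fsc smul_fsc1)
  finally show ?thesis .
next
  case RNij
  let ?K = "pre e G"
  have K: "?K \<in> FS" using G by simp
  have "smul q (mu q e G) (pre c H) = - smul q (pre 1 ?K) (pre c H)"
    using G H by (simp add: RNij mu_def smul_neg1)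
  also have "\<dots> = - (pre 1 (smul q ?K (pre c H)) + pre c (smul q (pre 1 ?K) H) - pre 1 (pre c (smul q ?K H)))"
    using K H by (simp add: smul_rec RNij mu_def)
  also have "smul q ?K (pre c H) = pre e (smul q G (pre c H)) + pre c (smul q ?K H) - pre 1 (pre (e * c) (smul q G H))"
    using G H by (simp add: smul_rec RNij mu_def)
  finally have "smul q (mu q e G) (pre c H) = - pre 1 (pre e (smul q G (pre c H))) - pre c (smul q (pre 1 ?K) H)
      + pre 1 (pre 1 (pre (e * c) (smul q G H)))"
    by (simp add: pre_add pre_diff algebra_simps)
  also have "\<dots> = mu q e (smul q G (pre c H)) + pre c (smul q (mu q e G) H) + nu q e c (smul q G H)"
    using G H by (simp add: RNij mu_def nu_def smul_neg1 pre_neg)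
  finally show ?thesis .
next
  case RTD
  let ?K = "pre 1 G"
  have K: "?K \<in> FS" using G by simp
  have "smul q (mu q e G) (pre c H) = - smul q (pre e ?K) (pre c H)"
    using G H by (simp add: RTD mu_def smul_neg1)
  also have "\<dots> = - (pre e (smul q ?K (pre c H)) + pre c (smul q (pre e ?K) H) - pre (e * c) (pre 1 (smul q ?K H)))"
    using K H by (simp add: smul_rec RTD mu_def)
  also have "\<dots> = - pre e (pre 1 (smul q G (pre c H))) - pre c (smul q (pre e ?K) H)
      + pre (e * c) (pre 1 (pre 1 (smul q G H)))"
    using G H by (simp add: RTD smul_TD algebra_simps)
  also have "\<dots> = mu q e (smul q G (pre c H)) + pre c (smul q (mu q e G) H) + nu q e c (smul q G H)"
    using G H by (simp add: RTD mu_def nu_def smul_neg1 pre_neg)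
  finally show ?thesis .
qed


section \<open>Associativity\<close>

lemma smul_expand3:
  fixes q :: "'k::field rq" and a :: "'a::comm_ring_1"
  shows "smul q (smul q (wsingle (a # U)) (wsingle (b # V))) (wsingle (c # W)) =
     pre a (smul q (smul q (wsingle U) (wsingle (b # V))) (wsingle (c # W)))
   + pre b (smul q (smul q (wsingle (a # U)) (wsingle V)) (wsingle (c # W)))
   + pre c (smul q (smul q (wsingle (a # U)) (wsingle (b # V))) (wsingle W))
   + mu q (a * c) (smul q (smul q (wsingle U) (wsingle (b # V))) (wsingle W))
   + mu q (b * c) (smul q (smul q (wsingle (a # U)) (wsingle V)) (wsingle W))
   + mu q (a * b) (smul q (smul q (wsingle U) (wsingle V)) (wsingle (c # W)))
   + nu q (a * b) c (smul q (smul q (wsingle U) (wsingle V)) (wsingle W))"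
  (is "?L = ?R")
proof -
  define S1 where "S1 = smul q (wsingle U) (wsingle (b # V))"
  define S2 where "S2 = smul q (wsingle (a # U)) (wsingle V)"
  define S3 where "S3 = smul q (wsingle U) (wsingle V)"
  have FS: "S1 \<in> FS" "S2 \<in> FS" "S3 \<in> FS" by (simp_all add: S1_def S2_def S3_def)
  have XY: "smul q (wsingle (a # U)) (wsingle (b # V)) = pre a S1 + pre b S2 + mu q (a * b) S3"
    by (simp add: S1_def S2_def S3_def sh_rec)
  have Z: "wsingle (c # W) = (pre c (wsingle W) :: 'a list \<Rightarrow> 'k)" by (simp add: pre_ws)
  have "?L = smul q (pre a S1) (pre c (wsingle W)) + smul q (pre b S2) (pre c (wsingle W))
      + smul q (mu q (a * b) S3) (pre c (wsingle W))"
    using FS unfolding XY Z by (simp add: smul_add1)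
  also have "\<dots> = (pre a (smul q S1 (pre c (wsingle W))) + pre c (smul q (pre a S1) (wsingle W)) + mu q (a * c) (smul q S1 (wsingle W)))
      + (pre b (smul q S2 (pre c (wsingle W))) + pre c (smul q (pre b S2) (wsingle W)) + mu q (b * c) (smul q S2 (wsingle W)))
      + (mu q (a * b) (smul q S3 (pre c (wsingle W))) + pre c (smul q (mu q (a * b) S3) (wsingle W)) + nu q (a * b) c (smul q S3 (wsingle W)))"
    using FS by (simp add: smul_rec smul_mu)
  also have "pre c (smul q (pre a S1) (wsingle W)) + pre c (smul q (pre b S2) (wsingle W)) + pre c (smul q (mu q (a * b) S3) (wsingle W))
      = pre c (smul q (smul q (wsingle (a # U)) (wsingle (b # V))) (wsingle W))"
    using FS unfolding XY by (simp add: smul_add1 pre_add)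
  then have "pre c (smul q (pre a S1) (wsingle W)) = pre c (smul q (smul q (wsingle (a # U)) (wsingle (b # V))) (wsingle W))
     - pre c (smul q (pre b S2) (wsingle W)) - pre c (smul q (mu q (a * b) S3) (wsingle W))"
    by (simp add: algebra_simps)
  finally show ?thesis by (simp add: S1_def S2_def S3_def Z algebra_simps)
qed

lemma nu_cong: assumes "x * y = x' * y'" shows "nu q x y = nu q x' y'"
  unfolding nu_def[abs_def] assms by (rule refl)

lemma smul_assoc_n:
  "\<forall>u v x. length u + length v + length x = n \<longrightarrow>
     smul q (smul q (wsingle u) (wsingle v)) (wsingle x) = smul q (wsingle u) (smul q (wsingle v) (wsingle x))"
proof (induct n rule: less_induct)
  case (less n)
  show ?case
  proof (intro allI impI)
    fix u v x :: "'a list" assume n: "length u + length v + length x = n"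
    let ?w = "wsingle :: 'a list \<Rightarrow> ('a list \<Rightarrow> 'b)"
    have rot: "smul q (smul q (?w p) (?w r)) (?w t) = smul q (smul q (?w r) (?w t)) (?w p)"
      if "length p + length r + length t < n" for p r t
    proof -
      have "smul q (smul q (?w p) (?w r)) (?w t) = smul q (?w p) (smul q (?w r) (?w t))"
        using less that by blast
      also have "\<dots> = smul q (smul q (?w r) (?w t)) (?w p)" by (rule smul_comm) simp_all
      finally show ?thesis .
    qed
    show "smul q (smul q (?w u) (?w v)) (?w x) = smul q (?w u) (smul q (?w v) (?w x))"
    proof (cases "u = [] \<or> v = [] \<or> x = []")
      case True
      then show ?thesis by (auto simp: smul_unitL smul_unitR)
    next
      case False
      then obtain a U b V c W where u: "u = a # U" and v: "v = b # V" and x: "x = c # W"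
        by (meson neq_Nil_conv)
      have "smul q (?w u) (smul q (?w v) (?w x)) = smul q (smul q (?w v) (?w x)) (?w u)"
        by (rule smul_comm) simp_all
      also have "\<dots> = smul q (smul q (?w (b # V)) (?w (c # W))) (?w (a # U))" by (simp add: u v x)
      also note smul_expand3
      finally have R: "smul q (?w u) (smul q (?w v) (?w x)) = 
           pre b (smul q (smul q (?w V) (?w (c # W))) (?w (a # U)))
         + pre c (smul q (smul q (?w (b # V)) (?w W)) (?w (a # U)))
         + pre a (smul q (smul q (?w (b # V)) (?w (c # W))) (?w U))
         + mu q (b * a) (smul q (smul q (?w V) (?w (c # W))) (?w U))
         + mu q (c * a) (smul q (smul q (?w (b # V)) (?w W)) (?w U))
         + mu q (b * c) (smul q (smul q (?w V) (?w W)) (?w (a # U)))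
         + nu q (b * c) a (smul q (smul q (?w V) (?w W)) (?w U))" .
      have L: "smul q (smul q (?w u) (?w v)) (?w x) =
           pre a (smul q (smul q (?w U) (?w (b # V))) (?w (c # W)))
         + pre b (smul q (smul q (?w (a # U)) (?w V)) (?w (c # W)))
         + pre c (smul q (smul q (?w (a # U)) (?w (b # V))) (?w W))
         + mu q (a * c) (smul q (smul q (?w U) (?w (b # V))) (?w W))
         + mu q (b * c) (smul q (smul q (?w (a # U)) (?w V)) (?w W))
         + mu q (a * b) (smul q (smul q (?w U) (?w V)) (?w (c # W)))
         + nu q (a * b) c (smul q (smul q (?w U) (?w V)) (?w W))"
        unfolding u v x by (rule smul_expand3)
      have r1: "smul q (smul q (?w U) (?w (b # V))) (?w (c # W)) = smul q (smul q (?w (b # V)) (?w (c # W))) (?w U)"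
        by (rule rot) (use n u v x in simp)
      have r2: "smul q (smul q (?w (a # U)) (?w V)) (?w (c # W)) = smul q (smul q (?w V) (?w (c # W))) (?w (a # U))"
        by (rule rot) (use n u v x in simp)
      have r3: "smul q (smul q (?w (a # U)) (?w (b # V))) (?w W) = smul q (smul q (?w (b # V)) (?w W)) (?w (a # U))"
        by (rule rot) (use n u v x in simp)
      have r4: "smul q (smul q (?w U) (?w (b # V))) (?w W) = smul q (smul q (?w (b # V)) (?w W)) (?w U)"
        by (rule rot) (use n u v x in simp)
      have r5: "smul q (smul q (?w (a # U)) (?w V)) (?w W) = smul q (smul q (?w V) (?w W)) (?w (a # U))"
        by (rule rot) (use n u v x in simp)
      have r6: "smul q (smul q (?w U) (?w V)) (?w (c # W)) = smul q (smul q (?w V) (?w (c # W))) (?w U)"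
        by (rule rot) (use n u v x in simp)
      have r7: "smul q (smul q (?w U) (?w V)) (?w W) = smul q (smul q (?w V) (?w W)) (?w U)"
        by (rule rot) (use n u v x in simp)
      have nn: "nu q (a * b) c = nu q (b * c) a"
        by (rule nu_cong) (simp add: ac_simps)
      have m1: "mu q (b * a) = mu q (a * b)" "mu q (c * a) = mu q (a * c)" by (simp_all add: mult.commute)
      show ?thesis unfolding L R r1 r2 r3 r4 r5 r6 r7 nn m1 by (simp add: algebra_simps)
    qed
  qed
qed

lemma smul_assoc_w:
  "smul q (smul q (wsingle u) (wsingle v)) (wsingle x) = smul q (wsingle u) (smul q (wsingle v) (wsingle x))"
  using smul_assoc_n by blast

lemma pmul_add1: "F \<in> FS \<Longrightarrow> G \<in> FS \<Longrightarrow> H \<in> FS \<Longrightarrow> pmul q (F + G) H = pmul q F H + pmul q G H"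
  using linopD(1)[OF bilopD(1)[OF bilop_pmul]] by blast
lemma pmul_add2: "F \<in> FS \<Longrightarrow> G \<in> FS \<Longrightarrow> H \<in> FS \<Longrightarrow> pmul q H (F + G) = pmul q H F + pmul q H G"
  using linopD(1)[OF bilopD(2)[OF bilop_pmul]] by blast
lemma pmul_fsc1: "F \<in> FS \<Longrightarrow> H \<in> FS \<Longrightarrow> pmul q (fsc c F) H = fsc c (pmul q F H)"
  using linopD(2)[OF bilopD(1)[OF bilop_pmul]] by blast
lemma FS_pmul[simp]: "F \<in> FS \<Longrightarrow> H \<in> FS \<Longrightarrow> pmul q F H \<in> FS"
  using bilop_FS[OF bilop_pmul] by blast

lemma pmul_pre: "F \<in> FS \<Longrightarrow> G \<in> FS \<Longrightarrow> pmul q (pre a F) (pre b G) = pre (a * b) (smul q F G)"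
  by (rule bil_ext[of "\<lambda>x y. pmul q (pre a x) (pre b y)" "\<lambda>x y. pre (a * b) (smul q x y)"])
    (simp_all add: bilop_compR[OF linop_pre linop_pre bilop_pmul] bilop_compL[OF linop_pre bilop_smul] pre_ws)

lemma TP_Nil: "F \<in> TP \<Longrightarrow> u \<in> supp F \<Longrightarrow> u \<noteq> []"
  by (auto simp: TP_iff)

lemma pmul_assoc:
  assumes F: "F \<in> TP" and G: "G \<in> TP" and H: "H \<in> TP"
  shows "pmul q (pmul q F G) H = pmul q F (pmul q G H)"
proof (rule bil_ext[of "\<lambda>x y. pmul q (pmul q x y) H" "\<lambda>x y. pmul q x (pmul q y H)"])
  have HF: "H \<in> FS" using H by (simp add: TP_iff)
  show "bilop (\<lambda>x y. pmul q (pmul q x y) H)"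
    by (rule bilop_compL[OF bilopD(1)[OF bilop_pmul HF] bilop_pmul])
  show "bilop (\<lambda>x y. pmul q x (pmul q y H))"
    by (rule bilop_compR[OF linop_id bilopD(1)[OF bilop_pmul HF] bilop_pmul, simplified])
  show "F \<in> FS" "G \<in> FS" using F G by (simp_all add: TP_iff)
  fix u v assume u: "u \<in> supp F" and v: "v \<in> supp G"
  obtain a U where uu: "u = a # U" using TP_Nil[OF F u] by (meson neq_Nil_conv)
  obtain b V where vv: "v = b # V" using TP_Nil[OF G v] by (meson neq_Nil_conv)
  show "pmul q (pmul q (wsingle u) (wsingle v)) H = pmul q (wsingle u) (pmul q (wsingle v) H)"
  proof (rule lin_ext[of "pmul q (pmul q (wsingle u) (wsingle v))" "\<lambda>z. pmul q (wsingle u) (pmul q (wsingle v) z)"])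
    show "linop (pmul q (pmul q (wsingle u) (wsingle v)))" by (simp add: bilopD(2)[OF bilop_pmul])
    show "linop (\<lambda>z. pmul q (wsingle u) (pmul q (wsingle v) z))"
      by (rule linop_comp) (simp_all add: bilopD(2)[OF bilop_pmul])
    show "H \<in> FS" by fact
    fix x assume x: "x \<in> supp H"
    obtain c W where xx: "x = c # W" using TP_Nil[OF H x] by (meson neq_Nil_conv)
    have "pmul q (pmul q (wsingle u) (wsingle v)) (wsingle x) = pmul q (pre (a * b) (smul q (wsingle U) (wsingle V))) (pre c (wsingle W))"
      by (simp add: uu vv xx pre_ws)
    also have "\<dots> = pre (a * b * c) (smul q (smul q (wsingle U) (wsingle V)) (wsingle W))"
      by (simp add: pmul_pre)
    also have "\<dots> = pre (a * (b * c)) (smul q (wsingle U) (smul q (wsingle V) (wsingle W)))"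
      using smul_assoc_w[of q U V W] by (simp add: mult.assoc)
    also have "\<dots> = pmul q (pre a (wsingle U)) (pre (b * c) (smul q (wsingle V) (wsingle W)))"
      by (simp add: pmul_pre)
    also have "\<dots> = pmul q (wsingle u) (pmul q (wsingle v) (wsingle x))"
      by (simp add: uu vv xx pre_ws)
    finally show "pmul q (pmul q (wsingle u) (wsingle v)) (wsingle x) = pmul q (wsingle u) (pmul q (wsingle v) (wsingle x))" .
  qed
qed


section \<open>The relations NR\<close>

lemma TP_add: "F \<in> TP \<Longrightarrow> G \<in> TP \<Longrightarrow> F + G \<in> (TP :: (_ \<Rightarrow> 'k::field) set)"
  by (simp add: TP_iff fapp)
lemma TP_fsc: "F \<in> TP \<Longrightarrow> fsc c F \<in> (TP :: (_ \<Rightarrow> 'k::field) set)"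
  by (simp add: TP_iff fapp)
lemma TP_ws: "u \<noteq> [] \<Longrightarrow> wsingle u \<in> (TP :: (_ \<Rightarrow> 'k::field) set)"
  by (simp add: TP_iff wsingle_apply)
lemma TP_diff: "F \<in> TP \<Longrightarrow> G \<in> TP \<Longrightarrow> F - G \<in> (TP :: (_ \<Rightarrow> 'k::field) set)"
  by (simp add: TP_iff fapp)
lemma TP_0: "0 \<in> (TP :: (_ \<Rightarrow> 'k::field) set)"
  by (simp add: TP_iff fapp)
lemma TP_FS: "F \<in> TP \<Longrightarrow> F \<in> FS" by (simp add: TP_iff)

lemma NR_TP: "F \<in> NR s \<Longrightarrow> F \<in> TP"
proof (induct rule: NR.induct)
  case zero then show ?case by (rule TP_0)
next
  case (add F G) then show ?case by (auto intro: TP_add)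
next
  case (scale F c) then show ?case by (auto intro: TP_fsc)
next
  case (rel_scale u c a v) then show ?case by (intro TP_diff TP_fsc TP_ws) simp_all
next
  case (rel_add u a b v) then show ?case by (intro TP_diff TP_ws) simp_all
qed

lemma NR_FS: "F \<in> NR s \<Longrightarrow> F \<in> FS" using NR_TP TP_FS by blast

lemma NR_neg: "F \<in> NR s \<Longrightarrow> - F \<in> NR s"
  using NR.scale[of F s "-1"] by (simp add: fsc_m1)
lemma NR_diff: assumes "F \<in> NR s" "G \<in> NR s" shows "F - G \<in> NR s"
proof -
  have "F + - G \<in> NR s" by (rule NR.add[OF assms(1) NR_neg[OF assms(2)]])
  then show ?thesis by simp
qed

lemma NR_sum: "(\<And>u. u \<in> S \<Longrightarrow> f u \<in> NR s) \<Longrightarrow> (\<Sum>u\<in>S. f u) \<in> NR s"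
  by (induct S rule: infinite_finite_induct) (auto intro: NR.zero NR.add)

lemma lin_allNR: "(\<And>u. u \<in> supp F \<Longrightarrow> f u \<in> NR s) \<Longrightarrow> lin f F \<in> NR s"
  unfolding linS_def by (rule NR_sum) (simp add: NR.scale)

lemma lin_NR:
  assumes f: "\<And>u. f u \<in> FS"
    and r1: "\<And>u c a w. f (u @ [s c a] @ w) - fsc c (f (u @ [a] @ w)) \<in> NR s"
    and r2: "\<And>u a b w. f (u @ [a + b] @ w) - f (u @ [a] @ w) - f (u @ [b] @ w) \<in> NR s"
    and F: "F \<in> NR s"
  shows "lin f F \<in> NR s"
  using F
proof (induct rule: NR.induct)
  case zero then show ?case by (simp add: NR.zero linS_zero[OF kmod_fsc])
next
  case (add F G)
  then show ?case by (simp add: linS_add[OF kmod_fsc] NR_FS NR.add)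
next
  case (scale F c)
  then show ?case by (simp add: linS_fsc[OF kmod_fsc] NR_FS NR.scale)
next
  case (rel_scale u c a v)
  then show ?case using r1 by (simp add: linS_diff[OF kmod_fsc] linS_fsc[OF kmod_fsc] linS_ws[OF kmod_fsc])
next
  case (rel_add u a b v)
  then show ?case using r2 by (simp add: linS_diff[OF kmod_fsc] linS_ws[OF kmod_fsc])
qed

lemma NR_pre: "N \<in> NR s \<Longrightarrow> pre x N \<in> NR s"
proof -
  assume N: "N \<in> NR s"
  have "lin (\<lambda>u. wsingle (x # u)) N \<in> NR s"
  proof (rule lin_NR[OF _ _ _ N])
    show "\<And>u c a w. wsingle (x # u @ [s c a] @ w) - fsc c (wsingle (x # u @ [a] @ w)) \<in> NR s"
      using NR.rel_scale[where u="x # _"] by simp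
    show "\<And>u a b w. wsingle (x # u @ [a + b] @ w) - wsingle (x # u @ [a] @ w) - wsingle (x # u @ [b] @ w) \<in> NR s"
      using NR.rel_add[where u="x # _"] by simp
  qed simp
  then show ?thesis using N by (simp add: pre_lin NR_FS)
qed

lemma NR_mu: "N \<in> NR s \<Longrightarrow> mu q e N \<in> NR s"
  by (cases q) (simp_all add: mu_def NR_pre NR_neg NR.scale)

lemma teq_refl: "teq s F F" by (simp add: teq_def NR.zero)
lemma teq_sym: "teq s F G \<Longrightarrow> teq s G F"
  unfolding teq_def using NR_neg by fastforce
lemma teq_trans: "teq s F G \<Longrightarrow> teq s G H \<Longrightarrow> teq s F H"
  unfolding teq_def using NR.add by fastforce
lemma teq_add: "teq s F F' \<Longrightarrow> teq s G G' \<Longrightarrow> teq s (F + G) (F' + G')"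
  unfolding teq_def using NR.add by (fastforce simp: algebra_simps)
lemma teq_neg: "teq s F F' \<Longrightarrow> teq s (- F) (- F')"
  unfolding teq_def using NR_neg by fastforce
lemma teq_fsc: "teq s F F' \<Longrightarrow> teq s (fsc c F) (fsc c F')"
  unfolding teq_def using NR.scale by (fastforce simp: fsc_diff)
lemma teq_pre: "F \<in> FS \<Longrightarrow> F' \<in> FS \<Longrightarrow> teq s F F' \<Longrightarrow> teq s (pre x F) (pre x F')"
  unfolding teq_def using NR_pre by (fastforce simp: pre_diff)
lemma teq_mu: "F \<in> FS \<Longrightarrow> F' \<in> FS \<Longrightarrow> teq s F F' \<Longrightarrow> teq s (mu q e F) (mu q e F')"
  unfolding teq_def using NR_mu linop_diff[OF linop_mu] by metis

lemma pre_rel_scale: "Y \<in> FS \<Longrightarrow> teq s (pre (s c a) Y) (fsc c (pre a Y))"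
proof -
  assume Y: "Y \<in> FS"
  have "pre (s c a) Y - fsc c (pre a Y) = lin (\<lambda>u. wsingle (s c a # u) - fsc c (wsingle (a # u))) Y"
    using Y by (simp add: pre_lin linS_fdiff[OF kmod_fsc] linS_ffsc[OF kmod_fsc])
  also have "\<dots> \<in> NR s" by (rule lin_allNR) (use NR.rel_scale[where u="[]"] in simp)
  finally show ?thesis by (simp add: teq_def)
qed

lemma pre_rel_add: "Y \<in> FS \<Longrightarrow> teq s (pre (a + b) Y) (pre a Y + pre b Y)"
proof -
  assume Y: "Y \<in> FS"
  have "pre (a + b) Y - (pre a Y + pre b Y) = lin (\<lambda>u. wsingle ((a + b) # u) - wsingle (a # u) - wsingle (b # u)) Y"
    using Y by (simp add: pre_lin linS_fdiff[OF kmod_fsc] linS_fadd[OF kmod_fsc] diff_diff_eq)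
  also have "\<dots> \<in> NR s" by (rule lin_allNR) (use NR.rel_add[where u="[]"] in simp)
  finally show ?thesis by (simp add: teq_def)
qed

lemma mu_rel_scale: "Y \<in> FS \<Longrightarrow> teq s (mu q (s c e) Y) (fsc c (mu q e Y))"
proof (cases q)
  case (RTheta \<theta>)
  assume Y: "Y \<in> FS"
  have "teq s (fsc \<theta> (pre (s c e) Y)) (fsc \<theta> (fsc c (pre e Y)))" by (rule teq_fsc[OF pre_rel_scale[OF Y]])
  then show ?thesis by (simp add: RTheta mu_def fsc_fsc mult.commute)
next
  case RNij
  assume Y: "Y \<in> FS"
  have "teq s (- pre 1 (pre (s c e) Y)) (- pre 1 (fsc c (pre e Y)))"
    by (rule teq_neg[OF teq_pre[OF _ _ pre_rel_scale[OF Y]]]) (simp_all add: Y)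
  then show ?thesis by (simp add: RNij mu_def pre_fsc fsc_neg)
next
  case RTD
  assume Y: "Y \<in> FS"
  have "teq s (- pre (s c e) (pre 1 Y)) (- fsc c (pre e (pre 1 Y)))"
    by (rule teq_neg[OF pre_rel_scale]) (simp add: Y)
  then show ?thesis by (simp add: RTD mu_def fsc_neg)
qed

lemma mu_rel_add: "Y \<in> FS \<Longrightarrow> teq s (mu q (a + b) Y) (mu q a Y + mu q b Y)"
proof (cases q)
  case (RTheta \<theta>)
  assume Y: "Y \<in> FS"
  have "teq s (fsc \<theta> (pre (a + b) Y)) (fsc \<theta> (pre a Y + pre b Y))" by (rule teq_fsc[OF pre_rel_add[OF Y]])
  then show ?thesis by (simp add: RTheta mu_def fsc_add)
next
  case RNij
  assume Y: "Y \<in> FS"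
  have "teq s (- pre 1 (pre (a + b) Y)) (- pre 1 (pre a Y + pre b Y))"
    by (rule teq_neg[OF teq_pre[OF _ _ pre_rel_add[OF Y]]]) (simp_all add: Y)
  then show ?thesis by (simp add: RNij mu_def pre_add)
next
  case RTD
  assume Y: "Y \<in> FS"
  have "teq s (- pre (a + b) (pre 1 Y)) (- (pre a (pre 1 Y) + pre b (pre 1 Y)))"
    by (rule teq_neg[OF pre_rel_add]) (simp add: Y)
  then show ?thesis by (simp add: RTD mu_def)
qed


section \<open>The products respect the relations\<close>

lemma teq_sum3: "teq s A A' \<Longrightarrow> teq s B B' \<Longrightarrow> teq s C C' \<Longrightarrow> teq s (A + B + C) (A' + B' + C')"
  by (intro teq_add)

lemma kalg_mult: "kalg s \<Longrightarrow> s c x * y = s c (x * y)"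
  by (simp add: kalg_def)

lemma sh_rel_scale:
  assumes ks: "kalg s"
  shows "teq s (sh q (u @ [s c a] @ w) V) (fsc c (sh q (u @ [a] @ w) V))"
proof (induct u arbitrary: V)
  case Nil
  show ?case
  proof (induct V)
    case Nil
    show ?case unfolding teq_def using NR.rel_scale[of "[]" s c a w] by simp
  next
    case (Cons b V)
    have e: "fsc c (sh q (a # w) (b # V)) = fsc c (pre a (sh q w (b # V))) + pre b (fsc c (sh q (a # w) V))
        + mu q (a * b) (fsc c (sh q w V))"
      by (simp add: sh_rec fsc_add pre_fsc linopD(2)[OF linop_mu])
    have "teq s (pre (s c a) (sh q w (b # V)) + pre b (sh q (s c a # w) V) + mu q (s c (a * b)) (sh q w V))
        (fsc c (pre a (sh q w (b # V))) + pre b (fsc c (sh q (a # w) V)) + fsc c (mu q (a * b) (sh q w V)))"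
      by (intro teq_sum3 pre_rel_scale mu_rel_scale teq_pre) (use Cons in simp_all)
    then show ?case using e by (simp add: sh_rec kalg_mult[OF ks] linopD(2)[OF linop_mu])
  qed
next
  case (Cons x u)
  note IHu = Cons
  show ?case
  proof (induct V)
    case Nil
    show ?case unfolding teq_def using NR.rel_scale[of "x # u" s c a w] by simp
  next
    case (Cons b V)
    have e: "fsc c (sh q (x # u @ [a] @ w) (b # V)) = pre x (fsc c (sh q (u @ [a] @ w) (b # V)))
        + pre b (fsc c (sh q (x # u @ [a] @ w) V)) + mu q (x * b) (fsc c (sh q (u @ [a] @ w) V))"
      by (simp add: sh_rec fsc_add pre_fsc linopD(2)[OF linop_mu])
    have "teq s (pre x (sh q (u @ [s c a] @ w) (b # V)) + pre b (sh q (x # u @ [s c a] @ w) V)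
          + mu q (x * b) (sh q (u @ [s c a] @ w) V))
        (pre x (fsc c (sh q (u @ [a] @ w) (b # V))) + pre b (fsc c (sh q (x # u @ [a] @ w) V))
          + mu q (x * b) (fsc c (sh q (u @ [a] @ w) V)))"
      by (intro teq_sum3 teq_pre teq_mu) (use IHu Cons in simp_all)
    then show ?case using e by (simp add: sh_rec)
  qed
qed

lemma sh_rel_add:
  shows "teq s (sh q (u @ [a + a'] @ w) V) (sh q (u @ [a] @ w) V + sh q (u @ [a'] @ w) V)"
proof (induct u arbitrary: V)
  case Nil
  show ?case
  proof (induct V)
    case Nil
    show ?case unfolding teq_def using NR.rel_add[of "[]" a a' w s] by (simp add: diff_diff_eq)
  next
    case (Cons b V)
    have e: "sh q (a # w) (b # V) + sh q (a' # w) (b # V) = (pre a (sh q w (b # V)) + pre a' (sh q w (b # V)))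
        + pre b (sh q (a # w) V + sh q (a' # w) V) + (mu q (a * b) (sh q w V) + mu q (a' * b) (sh q w V))"
      by (simp add: sh_rec pre_add algebra_simps)
    have "teq s (pre (a + a') (sh q w (b # V)) + pre b (sh q ((a + a') # w) V) + mu q (a * b + a' * b) (sh q w V))
        ((pre a (sh q w (b # V)) + pre a' (sh q w (b # V)))
        + pre b (sh q (a # w) V + sh q (a' # w) V) + (mu q (a * b) (sh q w V) + mu q (a' * b) (sh q w V)))"
      by (intro teq_sum3 pre_rel_add mu_rel_add teq_pre) (use Cons in simp_all)
    moreover have l: "sh q ((a + a') # w) (b # V) = pre (a + a') (sh q w (b # V)) + pre b (sh q ((a + a') # w) V)
        + mu q (a * b + a' * b) (sh q w V)" by (simp add: sh_rec distrib_right)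
    ultimately show ?case using e by (simp only: append.simps)
  qed
next
  case (Cons x u)
  note IHu = Cons
  show ?case
  proof (induct V)
    case Nil
    show ?case unfolding teq_def using NR.rel_add[of "x # u" a a' w s] by (simp add: diff_diff_eq)
  next
    case (Cons b V)
    have e: "sh q (x # u @ [a] @ w) (b # V) + sh q (x # u @ [a'] @ w) (b # V)
       = pre x (sh q (u @ [a] @ w) (b # V) + sh q (u @ [a'] @ w) (b # V))
        + pre b (sh q (x # u @ [a] @ w) V + sh q (x # u @ [a'] @ w) V)
        + mu q (x * b) (sh q (u @ [a] @ w) V + sh q (u @ [a'] @ w) V)"
      by (simp add: sh_rec pre_add linopD(1)[OF linop_mu] algebra_simps)
    have "teq s (pre x (sh q (u @ [a + a'] @ w) (b # V)) + pre b (sh q (x # u @ [a + a'] @ w) V)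
          + mu q (x * b) (sh q (u @ [a + a'] @ w) V))
        (pre x (sh q (u @ [a] @ w) (b # V) + sh q (u @ [a'] @ w) (b # V))
        + pre b (sh q (x # u @ [a] @ w) V + sh q (x # u @ [a'] @ w) V)
        + mu q (x * b) (sh q (u @ [a] @ w) V + sh q (u @ [a'] @ w) V))"
      by (intro teq_sum3 teq_pre teq_mu) (use IHu Cons in simp_all)
    moreover have l: "sh q (x # u @ [a + a'] @ w) (b # V) = pre x (sh q (u @ [a + a'] @ w) (b # V))
        + pre b (sh q (x # u @ [a + a'] @ w) V) + mu q (x * b) (sh q (u @ [a + a'] @ w) V)"
      by (simp add: sh_rec)
    ultimately show ?case using e by (simp only: append.simps)
  qed
qed

lemma shbar_rel_scale:
  assumes ks: "kalg s"
  shows "teq s (shbar q (u @ [s c a] @ w) v) (fsc c (shbar q (u @ [a] @ w) v))"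
proof (cases v)
  case Nil
  then show ?thesis by (cases u) (simp_all add: teq_refl)
next
  case (Cons b V)
  show ?thesis
  proof (cases u)
    case Nil
    have "teq s (pre (s c (a * b)) (sh q w V)) (fsc c (pre (a * b) (sh q w V)))"
      by (rule pre_rel_scale) simp
    then show ?thesis using Nil Cons by (simp add: kalg_mult[OF ks])
  next
    case (Cons x u')
    have "teq s (pre (x * b) (sh q (u' @ [s c a] @ w) V)) (pre (x * b) (fsc c (sh q (u' @ [a] @ w) V)))"
      by (intro teq_pre sh_rel_scale[OF ks]) simp_all
    then show ?thesis using Cons \<open>v = b # V\<close> by (simp add: pre_fsc)
  qed
qed

lemma shbar_rel_add:
  shows "teq s (shbar q (u @ [a + a'] @ w) v) (shbar q (u @ [a] @ w) v + shbar q (u @ [a'] @ w) v)"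
proof (cases v)
  case Nil
  then show ?thesis by (cases u) (simp_all add: teq_refl)
next
  case (Cons b V)
  show ?thesis
  proof (cases u)
    case Nil
    have "teq s (pre (a * b + a' * b) (sh q w V)) (pre (a * b) (sh q w V) + pre (a' * b) (sh q w V))"
      by (rule pre_rel_add) simp
    then show ?thesis using Nil Cons by (simp add: distrib_right)
  next
    case (Cons x u')
    have "teq s (pre (x * b) (sh q (u' @ [a + a'] @ w) V)) (pre (x * b) (sh q (u' @ [a] @ w) V + sh q (u' @ [a'] @ w) V))"
      by (intro teq_pre sh_rel_add) simp_all
    then show ?thesis using Cons \<open>v = b # V\<close> by (simp add: pre_add)
  qed
qed

lemma NR_pmul:
  assumes ks: "kalg s" and F: "F \<in> NR s" and G: "G \<in> FS"
  shows "pmul q F G \<in> NR s"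
  unfolding pmul_bil bil_def
proof (rule lin_NR[OF _ _ _ F])
  show "\<And>u. lin (shbar q u) G \<in> FS" by (rule FS_lin) simp
  fix u c a w
  have "lin (shbar q (u @ [s c a] @ w)) G - fsc c (lin (shbar q (u @ [a] @ w)) G)
      = lin (\<lambda>v. shbar q (u @ [s c a] @ w) v - fsc c (shbar q (u @ [a] @ w) v)) G"
    by (simp add: linS_fdiff[OF kmod_fsc] linS_ffsc[OF kmod_fsc])
  also have "\<dots> \<in> NR s" by (rule lin_allNR) (use shbar_rel_scale[OF ks] in \<open>simp add: teq_def\<close>)
  finally show "lin (shbar q (u @ [s c a] @ w)) G - fsc c (lin (shbar q (u @ [a] @ w)) G) \<in> NR s" .
next
  fix u a b w
  have "lin (shbar q (u @ [a + b] @ w)) G - lin (shbar q (u @ [a] @ w)) G - lin (shbar q (u @ [b] @ w)) G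
      = lin (\<lambda>v. shbar q (u @ [a + b] @ w) v - (shbar q (u @ [a] @ w) v + shbar q (u @ [b] @ w) v)) G"
    by (simp add: linS_fdiff[OF kmod_fsc] linS_fadd[OF kmod_fsc] diff_diff_eq)
  also have "\<dots> \<in> NR s" by (rule lin_allNR) (use shbar_rel_add in \<open>simp add: teq_def\<close>)
  finally show "lin (shbar q (u @ [a + b] @ w)) G - lin (shbar q (u @ [a] @ w)) G - lin (shbar q (u @ [b] @ w)) G \<in> NR s" .
qed

lemma tdag_lin: "tdag d F = lin (\<lambda>u. wsingle (map d u)) F"
  by (simp add: tdag_def linS_def)

lemma NR_tdag:
  fixes F :: "'a::comm_ring_1 list \<Rightarrow> 'k::field"
  assumes inv: "involution s d" and F: "F \<in> NR s"
  shows "tdag d F \<in> NR s"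
  unfolding tdag_lin
proof (rule lin_NR[OF _ _ _ F])
  have ds: "d (s c a) = s c (d a)" for c a using inv by (simp add: involution_def klinear_def)
  have da: "d (a + b) = d a + d b" for a b using inv by (simp add: involution_def klinear_def)
  show "\<And>u. wsingle (map d u) \<in> (FS :: ('a list \<Rightarrow> 'k) set)" by simp
  show "\<And>u c a w. wsingle (map d (u @ [s c a] @ w)) - fsc c (wsingle (map d (u @ [a] @ w))) \<in> NR s"
    using NR.rel_scale by (simp add: ds)
  show "\<And>u a b w. wsingle (map d (u @ [a + b] @ w)) - wsingle (map d (u @ [a] @ w)) - wsingle (map d (u @ [b] @ w)) \<in> NR s"
    using NR.rel_add by (simp add: da)
qed


lemma shbar_comm: "shbar q u v = shbar q v u"
  by (cases "(q, u, v)" rule: shbar.cases) (auto simp: sh_comm mult.commute)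

lemma pmul_comm: "F \<in> FS \<Longrightarrow> G \<in> FS \<Longrightarrow> pmul q F G = pmul q G F"
  by (rule bil_ext[OF bilop_pmul bilop_swap[OF bilop_pmul]]) (simp_all add: shbar_comm)

lemma FS_punit[simp]: "punit \<in> FS" by (simp add: punit_def)
lemma TP_punit: "punit \<in> TP" by (simp add: punit_def TP_ws)

lemma pmul_unit: "F \<in> TP \<Longrightarrow> pmul q punit F = F"
proof (rule lin_ext[OF bilopD(2)[OF bilop_pmul FS_punit] linop_id])
  assume F: "F \<in> TP"
  then show "F \<in> FS" by (rule TP_FS)
  fix u assume u: "u \<in> supp F"
  then obtain b V where "u = b # V" using TP_Nil[OF F u] by (meson neq_Nil_conv)
  then show "pmul q punit (wsingle u) = wsingle u" by (simp add: punit_def pre_ws)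
qed

lemma lin_Nil: "(\<And>u. f u [] = 0) \<Longrightarrow> lin f F [] = 0"
  by (simp add: lin_apply)

lemma shbar_Nil: "shbar q u v [] = 0"
  by (cases "(q, u, v)" rule: shbar.cases) (simp_all add: fapp)

lemma TP_pmul: "F \<in> TP \<Longrightarrow> G \<in> TP \<Longrightarrow> pmul q F G \<in> TP"
proof -
  assume "F \<in> TP" "G \<in> TP"
  then have "pmul q F G \<in> FS" by (simp add: TP_FS)
  moreover have "pmul q F G [] = 0" by (simp add: pmul_bil bil_def lin_Nil shbar_Nil)
  ultimately show ?thesis by (simp add: TP_iff)
qed

lemma TP_PA: "F \<in> TP \<Longrightarrow> PA F \<in> (TP :: ('a::comm_ring_1 list \<Rightarrow> 'k::field) set)"
  by (simp add: TP_iff PA_def)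

lemma tdag_eq: "tdag d = lin (\<lambda>u. wsingle (map d u))"
  by (simp add: fun_eq_iff tdag_lin)

lemma linop_tdag: "linop (tdag d :: ('a list \<Rightarrow> 'k::field) \<Rightarrow> _)"
  unfolding tdag_eq by (rule linop_linmap) simp

lemma tdag_ws: "tdag d (wsingle u) = (wsingle (map d u) :: _ \<Rightarrow> 'k::field)"
  by (simp add: tdag_lin linS_ws[OF kmod_fsc])

lemma FS_tdag[simp]: "F \<in> FS \<Longrightarrow> tdag d F \<in> (FS :: (_ \<Rightarrow> 'k::field) set)"
  using linopD(3)[OF linop_tdag] by blast

lemma TP_tdag: "F \<in> TP \<Longrightarrow> tdag d F \<in> (TP :: (_ \<Rightarrow> 'k::field) set)"
proof -
  assume F: "F \<in> TP"
  have "tdag d F [] = (\<Sum>u\<in>supp F. F u * wsingle (map d u) [])" by (simp add: tdag_lin lin_apply)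
  also have "\<dots> = 0" by (rule sum.neutral) (use TP_Nil[OF F] in \<open>auto simp: wsingle_apply\<close>)
  finally show ?thesis using F by (simp add: TP_iff)
qed

lemma PA_ws: "PA (wsingle u) = (wsingle (1 # u) :: _ \<Rightarrow> 'k::field)"
  by (simp add: PA_def pre_ws)

lemma sh_TD_cons1: "sh RTD (1 # U) V = (pre 1 (sh RTD U V) :: _ \<Rightarrow> 'k::field)"
proof -
  have "sh RTD (1 # U) V = (smul RTD (pre 1 (wsingle U)) (wsingle V) :: _ \<Rightarrow> 'k)" by (simp add: pre_ws)
  also have "\<dots> = pre 1 (sh RTD U V)" by (simp add: smul_TD)
  finally show ?thesis .
qed

lemma sh_TD_1: "sh RTD U [1] = (wsingle (1 # U) :: _ \<Rightarrow> 'k::field)"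
  by (simp add: sh_comm[of _ U] sh_TD_cons1 pre_ws)

lemma rq_ident:
  fixes F G :: "'a::comm_ring_1 list \<Rightarrow> 'k::field"
  assumes F: "F \<in> TP" and G: "G \<in> TP"
  shows "pmul q (PA F) (PA G) = PA (pmul q (PA F) G + pmul q F (PA G)) +
           (case q of RTheta \<theta> \<Rightarrow> fsc \<theta> (PA (pmul q F G))
                    | RNij \<Rightarrow> - PA (PA (pmul q F G))
                    | RTD \<Rightarrow> - PA (pmul q (pmul q F (PA punit)) G))"
proof -
  have FF: "F \<in> FS" "G \<in> FS" using F G by (simp_all add: TP_FS)
  have lPA: "linop (PA :: ('a list \<Rightarrow> 'k) \<Rightarrow> _)" unfolding PA_def[abs_def] by (rule linop_pre)
  have B0: "bilop (\<lambda>(x::'a list \<Rightarrow> 'k) y. PA (pmul q (PA x) y + pmul q x (PA y)))"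
    by (rule bilop_compL[OF lPA bilop_add[OF bilop_compR[OF lPA linop_id bilop_pmul] bilop_compR[OF linop_id lPA bilop_pmul]]])
  have B1: "bilop (\<lambda>(x::'a list \<Rightarrow> 'k) y. pmul q (PA x) (PA y))" by (rule bilop_compR[OF lPA lPA bilop_pmul])
  have base: "pmul q (PA (wsingle u)) (PA (wsingle v)) = PA (pmul q (PA (wsingle u)) (wsingle v) + pmul q (wsingle u) (PA (wsingle v)))
       + pre 1 (mu q (a * b) (sh q U V))" if "u = a # U" "v = b # V" for u v a b U V
    using that by (simp add: PA_def pre_ws sh_rec pre_add add_ac)
  have w: "u \<in> supp F \<Longrightarrow> v \<in> supp G \<Longrightarrow> \<exists>a U b V. u = a # U \<and> v = b # V" for u v
    using TP_Nil[OF F] TP_Nil[OF G] by (meson neq_Nil_conv)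
  show ?thesis
  proof (cases q)
    case (RTheta \<theta>)
    have "pmul q (PA F) (PA G) = PA (pmul q (PA F) G + pmul q F (PA G)) + fsc \<theta> (PA (pmul q F G))"
    proof (rule bil_ext[OF B1 bilop_add[OF B0 bilop_fsc[OF bilop_compL[OF lPA bilop_pmul]]] FF])
      fix u v assume "u \<in> supp F" "v \<in> supp G"
      then obtain a U b V where uv: "u = a # U" "v = b # V" using w by blast
      show "pmul q (PA (wsingle u)) (PA (wsingle v)) = PA (pmul q (PA (wsingle u)) (wsingle v) + pmul q (wsingle u) (PA (wsingle v)))
          + fsc \<theta> (PA (pmul q (wsingle u) (wsingle v)))"
        unfolding base[OF uv] using uv by (simp add: RTheta mu_def PA_def pre_fsc)
    qed
    then show ?thesis by (simp add: RTheta)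
  next
    case RNij
    have "pmul q (PA F) (PA G) = PA (pmul q (PA F) G + pmul q F (PA G)) + - PA (PA (pmul q F G))"
    proof (rule bil_ext[OF B1 bilop_add[OF B0 bilop_neg[OF bilop_compL[OF linop_comp[OF lPA lPA] bilop_pmul]]] FF])
      fix u v assume "u \<in> supp F" "v \<in> supp G"
      then obtain a U b V where uv: "u = a # U" "v = b # V" using w by blast
      show "pmul q (PA (wsingle u)) (PA (wsingle v)) = PA (pmul q (PA (wsingle u)) (wsingle v) + pmul q (wsingle u) (PA (wsingle v)))
          + - PA (PA (pmul q (wsingle u) (wsingle v)))"
        unfolding base[OF uv] using uv by (simp add: RNij mu_def PA_def pre_neg)
    qed
    then show ?thesis by (simp add: RNij)
  next
    case RTD
    have K: "PA punit \<in> FS" by (simp add: PA_def)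
    have B3: "bilop (\<lambda>(x::'a list \<Rightarrow> 'k) y. - PA (pmul q (pmul q x (PA punit)) y))"
      by (rule bilop_neg[OF bilop_compL[OF lPA bilop_compR[OF bilopD(1)[OF bilop_pmul K] linop_id bilop_pmul, simplified]]])
    have "pmul q (PA F) (PA G) = PA (pmul q (PA F) G + pmul q F (PA G)) + - PA (pmul q (pmul q F (PA punit)) G)"
    proof (rule bil_ext[OF B1 bilop_add[OF B0 B3] FF])
      fix u v assume "u \<in> supp F" "v \<in> supp G"
      then obtain a U b V where uv: "u = a # U" "v = b # V" using w by blast
      have "pmul q (pmul q (wsingle u) (PA punit)) (wsingle v) = pre (a * b) (pre 1 (sh q U V))"
        using uv by (simp add: RTD punit_def PA_ws sh_TD_1 sh_TD_cons1 pre_ws)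
      then show "pmul q (PA (wsingle u)) (PA (wsingle v)) = PA (pmul q (PA (wsingle u)) (wsingle v) + pmul q (wsingle u) (PA (wsingle v)))
          + - PA (pmul q (pmul q (wsingle u) (PA punit)) (wsingle v))"
        unfolding base[OF uv] by (simp add: RTD mu_def PA_def pre_neg)
    qed
    then show ?thesis by (simp add: RTD)
  qed
qed


section \<open>The involution on T^+(A)\<close>

lemma inv_1: assumes "involution s d" shows "d 1 = 1"
proof -
  have m: "d (x * y) = d y * d x" and dd: "d (d x) = x" for x y using assms by (auto simp: involution_def)
  have "d (d 1 * 1) = d 1 * d (d 1)" by (rule m)
  then show ?thesis by (simp add: dd)
qed

lemma inv_mult: assumes "involution s d" shows "d (x * y) = d x * (d y :: 'a::comm_ring_1)"
  using assms by (simp add: involution_def mult.commute)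

lemma tdag_pre: "X \<in> FS \<Longrightarrow> tdag d (pre e X) = (pre (d e) (tdag d X) :: _ \<Rightarrow> 'k::field)"
  by (rule lin_ext[OF linop_comp[OF linop_tdag linop_pre] linop_comp[OF linop_pre linop_tdag]])
    (simp_all add: pre_ws tdag_ws)

lemma tdag_mu:
  assumes d1: "d 1 = 1" and X: "X \<in> FS"
  shows "tdag d (mu q e X) = (mu q (d e) (tdag d X) :: _ \<Rightarrow> 'k::field)"
  using X by (cases q) (simp_all add: mu_def linopD(2)[OF linop_tdag] linop_neg[OF linop_tdag] tdag_pre d1)

lemma tdag_sh:
  assumes inv: "involution s d"
  shows "tdag d (sh q u v) = (sh q (map d u) (map d v) :: _ \<Rightarrow> 'k::field)"
proof (induct q u v rule: sh.induct)
  case (1 q V) then show ?case by (simp add: tdag_ws)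
next
  case (2 q a U) then show ?case by (simp add: tdag_ws)
next
  case (3 q a U b V)
  have "tdag d (sh q (a # U) (b # V)) = tdag d (pre a (sh q U (b # V))) + tdag d (pre b (sh q (a # U) V))
      + tdag d (mu q (a * b) (sh q U V))"
    by (simp add: sh_rec linopD(1)[OF linop_tdag])
  also have "\<dots> = pre (d a) (sh q (map d U) (d b # map d V)) + pre (d b) (sh q (d a # map d U) (map d V))
      + mu q (d a * d b) (sh q (map d U) (map d V))"
  proof -
    have h: "tdag d (sh q U V) = (sh q (map d U) (map d V) :: _ \<Rightarrow> 'k)" using 3 by (cases q) auto
    show ?thesis using 3 h by (simp add: tdag_pre tdag_mu inv_1[OF inv] inv_mult[OF inv])
  qed
  also have "\<dots> = sh q (map d (a # U)) (map d (b # V))" by (simp add: sh_rec)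
  finally show ?case .
qed

lemma tdag_shbar:
  assumes inv: "involution s d"
  shows "tdag d (shbar q u v) = (shbar q (map d v) (map d u) :: _ \<Rightarrow> 'k::field)"
  by (cases "(q, u, v)" rule: shbar.cases)
    (simp_all add: tdag_pre tdag_sh[OF inv] inv_mult[OF inv] sh_comm mult.commute linop_0[OF linop_tdag])

lemma tdag_pmul:
  assumes inv: "involution s d" and F: "F \<in> FS" and G: "G \<in> FS"
  shows "tdag d (pmul q F G) = (pmul q (tdag d G) (tdag d F) :: _ \<Rightarrow> 'k::field)"
  by (rule bil_ext[OF bilop_compL[OF linop_tdag bilop_pmul]
        bilop_swap[OF bilop_compR[OF linop_tdag linop_tdag bilop_pmul]] F G])
    (simp add: tdag_ws tdag_shbar[OF inv])

lemma tdag_tdag: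
  assumes inv: "involution s d" and F: "F \<in> FS"
  shows "tdag d (tdag d F) = (F :: _ \<Rightarrow> 'k::field)"
proof (rule lin_ext[OF linop_comp[OF linop_tdag linop_tdag] linop_id F])
  have dd: "d (d x) = x" for x using inv by (simp add: involution_def)
  fix u show "tdag d (tdag d (wsingle u)) = (wsingle u :: _ \<Rightarrow> 'k)"
  proof -
    have "map (d \<circ> d) u = u" by (induct u) (simp_all add: dd)
    then show ?thesis by (simp add: tdag_ws)
  qed
qed

lemma PA_tdag:
  assumes inv: "involution s d" and F: "F \<in> FS"
  shows "PA (tdag d F) = (tdag d (PA F) :: _ \<Rightarrow> 'k::field)"
  using F by (simp add: PA_def tdag_pre inv_1[OF inv])

lemma teq_eq: "F = G \<Longrightarrow> teq s F G" by (simp add: teq_refl)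

lemma part1:
  fixes sA :: "'k::field \<Rightarrow> 'a::comm_ring_1 \<Rightarrow> 'a"
  assumes ks: "kalg sA" and inv: "involution sA d"
  shows "tplus_inv_comm_rq sA d q"
  unfolding tplus_inv_comm_rq_def
proof (intro conjI ballI allI)
  show "NR sA \<subseteq> (TP :: ('a list \<Rightarrow> 'k) set)" using NR_TP by blast
  show "(punit :: 'a list \<Rightarrow> 'k) \<in> TP" by (rule TP_punit)
  fix F G H :: "'a list \<Rightarrow> 'k" and c :: 'k
  show "F \<in> TP \<Longrightarrow> G \<in> TP \<Longrightarrow> F + G \<in> TP" by (rule TP_add)
  show "F \<in> TP \<Longrightarrow> G \<in> TP \<Longrightarrow> pmul q F G \<in> TP" by (rule TP_pmul)
  show "F \<in> TP \<Longrightarrow> fsc c F \<in> TP" by (rule TP_fsc)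
  show "F \<in> TP \<Longrightarrow> PA F \<in> TP" by (rule TP_PA)
  show "F \<in> TP \<Longrightarrow> tdag d F \<in> TP" by (rule TP_tdag)
  show "F \<in> NR sA \<Longrightarrow> G \<in> TP \<Longrightarrow> pmul q F G \<in> NR sA"
    by (rule NR_pmul[OF ks]) (simp_all add: TP_FS)
  show "F \<in> NR sA \<Longrightarrow> G \<in> TP \<Longrightarrow> pmul q G F \<in> NR sA"
    using NR_pmul[OF ks] pmul_comm NR_FS TP_FS by metis
  show "F \<in> NR sA \<Longrightarrow> PA F \<in> NR sA" by (simp add: PA_def NR_pre)
  show "F \<in> NR sA \<Longrightarrow> tdag d F \<in> NR sA" by (rule NR_tdag[OF inv])
  show "F \<in> TP \<Longrightarrow> G \<in> TP \<Longrightarrow> H \<in> TP \<Longrightarrow> teq sA (pmul q (pmul q F G) H) (pmul q F (pmul q G H))"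
    by (intro teq_eq pmul_assoc)
  show "F \<in> TP \<Longrightarrow> G \<in> TP \<Longrightarrow> teq sA (pmul q F G) (pmul q G F)"
    by (intro teq_eq pmul_comm) (simp_all add: TP_FS)
  show "F \<in> TP \<Longrightarrow> teq sA (pmul q punit F) F"
    by (intro teq_eq pmul_unit)
  show "F \<in> TP \<Longrightarrow> G \<in> TP \<Longrightarrow> H \<in> TP \<Longrightarrow> teq sA (pmul q F (G + H)) (pmul q F G + pmul q F H)"
    by (intro teq_eq pmul_add2) (simp_all add: TP_FS)
  show "F \<in> TP \<Longrightarrow> G \<in> TP \<Longrightarrow> teq sA (pmul q (fsc c F) G) (fsc c (pmul q F G))"
    by (intro teq_eq pmul_fsc1) (simp_all add: TP_FS)
  show "F \<in> TP \<Longrightarrow> G \<in> TP \<Longrightarrow> teq sA (PA (F + G)) (PA F + PA G)"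
    by (intro teq_eq) (simp add: PA_def pre_add)
  show "F \<in> TP \<Longrightarrow> teq sA (PA (fsc c F)) (fsc c (PA F))"
    by (intro teq_eq) (simp add: PA_def pre_fsc)
  show "F \<in> TP \<Longrightarrow> G \<in> TP \<Longrightarrow> teq sA (pmul q (PA F) (PA G))
          (PA (pmul q (PA F) G + pmul q F (PA G)) +
           (case q of RTheta \<theta> \<Rightarrow> fsc \<theta> (PA (pmul q F G))
                    | RNij \<Rightarrow> - PA (PA (pmul q F G))
                    | RTD \<Rightarrow> - PA (pmul q (pmul q F (PA punit)) G)))"
    by (intro teq_eq rq_ident)
  show "F \<in> TP \<Longrightarrow> G \<in> TP \<Longrightarrow> teq sA (tdag d (F + G)) (tdag d F + tdag d G)"
    by (intro teq_eq linopD(1)[OF linop_tdag]) (simp_all add: TP_FS)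
  show "F \<in> TP \<Longrightarrow> teq sA (tdag d (fsc c F)) (fsc c (tdag d F))"
    by (intro teq_eq linopD(2)[OF linop_tdag]) (simp_all add: TP_FS)
  show "F \<in> TP \<Longrightarrow> teq sA (tdag d (tdag d F)) F"
    by (intro teq_eq tdag_tdag[OF inv]) (simp_all add: TP_FS)
  show "F \<in> TP \<Longrightarrow> G \<in> TP \<Longrightarrow> teq sA (tdag d (pmul q F G)) (pmul q (tdag d G) (tdag d F))"
    by (intro teq_eq tdag_pmul[OF inv]) (simp_all add: TP_FS)
  show "F \<in> TP \<Longrightarrow> teq sA (PA (tdag d F)) (tdag d (PA F))"
    by (intro teq_eq PA_tdag[OF inv]) (simp_all add: TP_FS)
qed


section \<open>Part two: the universal property\<close>

fun th :: "('a \<Rightarrow> 'x::comm_ring_1) \<Rightarrow> ('x \<Rightarrow> 'x) \<Rightarrow> 'a list \<Rightarrow> 'x" where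
  "th \<phi> P [] = 1"
| "th \<phi> P (a # U) = P (\<phi> a * th \<phi> P U)"

definition Wd :: "('a \<Rightarrow> 'x::comm_ring_1) \<Rightarrow> ('x \<Rightarrow> 'x) \<Rightarrow> 'a list \<Rightarrow> 'x" where
  "Wd \<phi> P u = (case u of [] \<Rightarrow> 0 | a # U \<Rightarrow> \<phi> a * th \<phi> P U)"

lemma Wd_Nil[simp]: "Wd \<phi> P [] = 0" by (simp add: Wd_def)
lemma Wd_Cons[simp]: "Wd \<phi> P (a # U) = \<phi> a * th \<phi> P U" by (simp add: Wd_def)

lemma sh_induct2:
  assumes "\<And>V. R [] V" "\<And>a U. R (a # U) []"
    "\<And>a U b V. R U (b # V) \<Longrightarrow> R (a # U) V \<Longrightarrow> R U V \<Longrightarrow> R (a # U) (b # V)"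
  shows "R u v"
proof (induct "length u + length v" arbitrary: u v rule: less_induct)
  case less
  show ?case
  proof (cases u)
    case Nil then show ?thesis using assms(1) by simp
  next
    case (Cons a U)
    show ?thesis
    proof (cases v)
      case Nil then show ?thesis using assms(2) Cons by simp
    next
      case (Cons b V)
      then show ?thesis using \<open>u = a # U\<close> assms(3) less by simp
    qed
  qed
qed

locale UP =
  fixes sA :: "'k::field \<Rightarrow> 'a::comm_ring_1 \<Rightarrow> 'a" and sX :: "'k \<Rightarrow> 'x::comm_ring_1 \<Rightarrow> 'x"
    and PX :: "'x \<Rightarrow> 'x" and \<phi> :: "'a \<Rightarrow> 'x" and q :: "'k rq"
  assumes kX: "kalg sX" and PXlin: "klinear sX sX PX" and rq: "rq_op sX q PX" and hom: "alg_hom sA sX \<phi>"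
begin

lemma kmX: "kmod sX" by (rule kmod_kalg[OF kX])

lemma PX_add: "PX (x + y) = PX x + PX y" using PXlin by (simp add: klinear_def)
lemma PX_sc: "PX (sX c x) = sX c (PX x)" using PXlin by (simp add: klinear_def)
lemma PX_0: "PX 0 = 0" using PX_add[of 0 0] by simp
lemma PX_neg: "PX (- x) = - PX x" using PX_add[of x "-x"] PX_0 by (metis add.right_inverse minus_unique)
lemma PX_diff: "PX (x - y) = PX x - PX y" using PX_add[of x "-y"] PX_neg by simp
lemma phi_add: "\<phi> (x + y) = \<phi> x + \<phi> y" using hom by (simp add: alg_hom_def klinear_def)
lemma phi_sc: "\<phi> (sA c x) = sX c (\<phi> x)" using hom by (simp add: alg_hom_def klinear_def)
lemma phi_1: "\<phi> 1 = 1" using hom by (simp add: alg_hom_def)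
lemma phi_mult: "\<phi> (x * y) = \<phi> x * \<phi> y" using hom by (simp add: alg_hom_def)
lemma scL: "sX c x * y = sX c (x * y)" using kX by (simp add: kalg_def)
lemma scR: "x * sX c y = sX c (x * y)" using scL[of c y x] by (simp add: mult.commute)

abbreviation "TH \<equiv> th \<phi> PX"
abbreviation "WD \<equiv> Wd \<phi> PX"
definition "ThL F = linS sX TH F"
definition "Phi F = linS sX WD F"

lemma linX_map:
  assumes "\<And>x y. L (x + y) = L x + L y" "\<And>c x. L (sX c x) = sX c (L x)"
  shows "L (linS sX g F) = linS sX (\<lambda>u. L (g u)) F"
  by (rule linS_hom[OF kmX, where D=UNIV]) (simp_all add: assms)

lemma linX_lin:
  assumes "\<And>u. f u \<in> FS"
  shows "linS sX g (lin f F) = linS sX (\<lambda>u. linS sX g (f u)) F"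
  by (rule linS_hom[OF kmX, where D=FS]) (simp_all add: assms linS_add[OF kmX] linS_fsc[OF kmX])

lemma ThL_add: "F \<in> FS \<Longrightarrow> G \<in> FS \<Longrightarrow> ThL (F + G) = ThL F + ThL G"
  by (simp add: ThL_def linS_add[OF kmX])
lemma ThL_fsc: "F \<in> FS \<Longrightarrow> ThL (fsc c F) = sX c (ThL F)"
  by (simp add: ThL_def linS_fsc[OF kmX])
lemma ThL_neg: "F \<in> FS \<Longrightarrow> ThL (- F) = - ThL F"
  by (simp add: ThL_def linS_neg[OF kmX])
lemma ThL_ws: "ThL (wsingle u) = TH u"
  by (simp add: ThL_def linS_ws[OF kmX])
lemma Phi_add: "F \<in> FS \<Longrightarrow> G \<in> FS \<Longrightarrow> Phi (F + G) = Phi F + Phi G"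
  by (simp add: Phi_def linS_add[OF kmX])
lemma Phi_fsc: "F \<in> FS \<Longrightarrow> Phi (fsc c F) = sX c (Phi F)"
  by (simp add: Phi_def linS_fsc[OF kmX])
lemma Phi_ws: "Phi (wsingle u) = WD u"
  by (simp add: Phi_def linS_ws[OF kmX])
lemma Phi_0: "Phi 0 = 0"
  by (simp add: Phi_def linS_zero[OF kmX])

lemma ThL_pre: "F \<in> FS \<Longrightarrow> ThL (pre a F) = PX (\<phi> a * ThL F)"
proof -
  assume F: "F \<in> FS"
  have "ThL (pre a F) = linS sX (\<lambda>u. ThL (wsingle (a # u))) F"
    unfolding ThL_def using F by (simp add: pre_lin linX_lin)
  also have "\<dots> = linS sX (\<lambda>u. PX (\<phi> a * TH u)) F" by (simp add: ThL_ws)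
  also have "\<dots> = PX (\<phi> a * ThL F)" unfolding ThL_def
    by (rule linX_map[symmetric]) (simp_all add: PX_add PX_sc distrib_left scR)
  finally show ?thesis .
qed

lemma Phi_pre: "F \<in> FS \<Longrightarrow> Phi (pre a F) = \<phi> a * ThL F"
proof -
  assume F: "F \<in> FS"
  have "Phi (pre a F) = linS sX (\<lambda>u. Phi (wsingle (a # u))) F"
    unfolding Phi_def using F by (simp add: pre_lin linX_lin)
  also have "\<dots> = linS sX (\<lambda>u. \<phi> a * TH u) F" by (simp add: Phi_ws)
  also have "\<dots> = \<phi> a * ThL F" unfolding ThL_def
    by (rule linX_map[symmetric]) (simp_all add: distrib_left scR)
  finally show ?thesis .
qed

lemma rq_inst: "PX x * PX y = PX (PX x * y + x * PX y) +
      (case q of RTheta \<theta> \<Rightarrow> sX \<theta> (PX (x * y)) | RNij \<Rightarrow> - PX (PX (x * y)) | RTD \<Rightarrow> - PX (x * PX 1 * y))"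
  using rq unfolding rq_op_def by blast

lemma PPone: "q = RTD \<Longrightarrow> PX (PX z) = PX z * PX 1"
proof -
  assume td: "q = RTD"
  have "PX z * PX 1 = PX (PX z * 1 + z * PX 1) + - PX (z * PX 1 * 1)"
    using rq_inst[of z 1] td by simp
  also have "\<dots> = PX (PX z)" by (simp add: PX_add)
  finally show ?thesis by simp
qed

lemma TD_range: "q = RTD \<Longrightarrow> PX (TH U * TH V) = PX 1 * (TH U * TH V)"
proof -
  assume td: "q = RTD"
  have "TH U * TH V = 1 \<or> (\<exists>z. TH U * TH V = PX z)"
  proof (cases U)
    case Nil then show ?thesis by (cases V) auto
  next
    case (Cons a U')
    show ?thesis
    proof (cases V)
      case Nil then show ?thesis using Cons by auto
    next
      case (Cons b V')
      have "TH U * TH V = PX (PX (\<phi> a * TH U') * (\<phi> b * TH V') + (\<phi> a * TH U') * PX (\<phi> b * TH V'))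
          + - PX ((\<phi> a * TH U') * PX 1 * (\<phi> b * TH V'))"
        using rq_inst[of "\<phi> a * TH U'" "\<phi> b * TH V'"] td \<open>U = a # U'\<close> Cons by simp
      also have "\<dots> = PX (PX (\<phi> a * TH U') * (\<phi> b * TH V') + (\<phi> a * TH U') * PX (\<phi> b * TH V')
          - (\<phi> a * TH U') * PX 1 * (\<phi> b * TH V'))" by (simp add: PX_diff)
      finally show ?thesis by blast
    qed
  qed
  then show ?thesis
  proof
    assume "TH U * TH V = 1" then show ?thesis by simp
  next
    assume "\<exists>z. TH U * TH V = PX z"
    then obtain z where "TH U * TH V = PX z" by blast
    then show ?thesis using PPone[OF td] by (simp add: mult.commute)
  qed
qed

lemma ThL_sh: "ThL (sh q u v) = TH u * TH v"
proof (induct u v rule: sh_induct2)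
  case (1 V) then show ?case by (simp add: ThL_ws)
next
  case (2 a U) then show ?case by (simp add: ThL_ws)
next
  case (3 a U b V)
  let ?x = "\<phi> a * TH U" and ?y = "\<phi> b * TH V"
  have "ThL (sh q (a # U) (b # V)) = PX (\<phi> a * ThL (sh q U (b # V))) + PX (\<phi> b * ThL (sh q (a # U) V))
      + ThL (mu q (a * b) (sh q U V))"
    by (simp add: sh_rec ThL_add ThL_pre)
  also have "\<dots> = PX (PX ?x * ?y + ?x * PX ?y) + ThL (mu q (a * b) (sh q U V))"
    using 3 by (simp add: PX_add ac_simps)
  also have "ThL (mu q (a * b) (sh q U V)) = (case q of RTheta \<theta> \<Rightarrow> sX \<theta> (PX (?x * ?y))
               | RNij \<Rightarrow> - PX (PX (?x * ?y))
               | RTD \<Rightarrow> - PX (?x * PX 1 * ?y))"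
  proof (cases q)
    case (RTheta \<theta>)
    then show ?thesis using 3 by (simp add: mu_def ThL_fsc ThL_pre phi_mult ac_simps)
  next
    case RNij
    then show ?thesis using 3 by (simp add: mu_def ThL_neg ThL_pre phi_mult phi_1 ac_simps)
  next
    case RTD
    have "PX (\<phi> a * \<phi> b * PX (TH U * TH V)) = PX (\<phi> a * \<phi> b * (PX 1 * (TH U * TH V)))"
      by (simp add: TD_range[OF RTD])
    then show ?thesis using 3 RTD by (simp add: mu_def ThL_neg ThL_pre phi_mult phi_1 ac_simps)
  qed
  also have "PX (PX ?x * ?y + ?x * PX ?y) + (case q of RTheta \<theta> \<Rightarrow> sX \<theta> (PX (?x * ?y))
               | RNij \<Rightarrow> - PX (PX (?x * ?y))
               | RTD \<Rightarrow> - PX (?x * PX 1 * ?y)) = PX ?x * PX ?y"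
    using rq_inst[of ?x ?y] by simp
  finally show ?case by simp
qed

end


context UP
begin

lemma Phi_shbar: "Phi (shbar q u v) = WD u * WD v"
  by (cases "(q, u, v)" rule: shbar.cases) (simp_all add: Phi_pre ThL_sh phi_mult Phi_0 ac_simps)

lemma Phi_pmul: "F \<in> FS \<Longrightarrow> G \<in> FS \<Longrightarrow> Phi (pmul q F G) = Phi F * Phi G"
proof -
  assume F: "F \<in> FS" and G: "G \<in> FS"
  have "Phi (pmul q F G) = linS sX (\<lambda>u. linS sX (\<lambda>v. Phi (shbar q u v)) G) F"
    unfolding pmul_bil bil_def Phi_def by (simp add: linX_lin FS_lin)
  also have "\<dots> = linS sX (\<lambda>u. WD u * Phi G) F"
  proof (rule linS_cong[OF kmX])
    fix u
    show "linS sX (\<lambda>v. Phi (shbar q u v)) G = WD u * Phi G"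
      unfolding Phi_shbar unfolding Phi_def
      by (rule linX_map[symmetric]) (simp_all add: distrib_left scR)
  qed
  also have "\<dots> = Phi F * Phi G" unfolding Phi_def[of F]
    by (rule linX_map[symmetric]) (simp_all add: distrib_right scL)
  finally show ?thesis .
qed

lemma th_scale: "TH (u @ sA c a # w) = sX c (TH (u @ a # w))"
  by (induct u) (simp_all add: phi_sc scL scR PX_sc)

lemma Wd_scale: "WD (u @ sA c a # w) = sX c (WD (u @ a # w))"
  by (cases u) (simp_all add: phi_sc scL scR th_scale)

lemma th_add: "TH (u @ (a + b) # w) = TH (u @ a # w) + TH (u @ b # w)"
  by (induct u) (simp_all add: phi_add distrib_left distrib_right PX_add)

lemma Wd_add: "WD (u @ (a + b) # w) = WD (u @ a # w) + WD (u @ b # w)"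
  by (cases u) (simp_all add: phi_add distrib_left distrib_right th_add)

lemma Phi_diff: "F \<in> FS \<Longrightarrow> G \<in> FS \<Longrightarrow> Phi (F - G) = Phi F - Phi G"
  by (simp add: Phi_def linS_diff[OF kmX])

lemma Phi_NR: "N \<in> NR sA \<Longrightarrow> Phi N = 0"
proof (induct rule: NR.induct)
  case zero then show ?case by (rule Phi_0)
next
  case (add F G) then show ?case by (simp add: Phi_add NR_FS)
next
  case (scale F c) then show ?case by (simp add: Phi_fsc NR_FS km_0[OF kmX])
next
  case (rel_scale u c a v) then show ?case by (simp add: Phi_diff Phi_fsc Phi_ws Wd_scale)
next
  case (rel_add u a b v) then show ?case by (simp add: Phi_diff Phi_ws Wd_add)
qed

lemma th_Wd: "U \<noteq> [] \<Longrightarrow> TH U = PX (WD U)"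
  by (cases U) auto

lemma Phi_PA: "F \<in> TP \<Longrightarrow> Phi (PA F) = PX (Phi F)"
proof -
  assume F: "F \<in> TP"
  have "Phi (PA F) = ThL F" using F by (simp add: PA_def Phi_pre phi_1 TP_FS)
  also have "\<dots> = linS sX (\<lambda>u. PX (WD u)) F" unfolding ThL_def
    by (rule linS_cong[OF kmX]) (simp add: th_Wd TP_Nil[OF F])
  also have "\<dots> = PX (Phi F)" unfolding Phi_def
    by (rule linX_map[symmetric]) (simp_all add: PX_add PX_sc)
  finally show ?thesis .
qed

lemma Phi_punit: "Phi punit = 1"
  by (simp add: punit_def Phi_ws phi_1)

lemma Phi_iA: "Phi (iA a) = \<phi> a"
  by (simp add: iA_def Phi_ws)

lemma Phi_mor: "tplus_rq_mor sA q sX PX Phi"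
  unfolding tplus_rq_mor_def
  by (simp add: Phi_NR Phi_add Phi_fsc TP_FS Phi_punit Phi_pmul Phi_PA)

lemma Phi_tdag:
  assumes invX: "involution sX dX" and PdX: "\<And>x. PX (dX x) = dX (PX x)" and phid: "\<And>a. \<phi> (d a) = dX (\<phi> a)"
    and F: "F \<in> FS"
  shows "Phi (tdag d F) = dX (Phi F)"
proof -
  have dXlin: "dX (x + y) = dX x + dX y" "dX (sX c x) = sX c (dX x)" for x y c
    using invX by (auto simp: involution_def klinear_def)
  have dX0: "dX 0 = 0" using dXlin(1)[of 0 0] by simp
  have thd: "TH (map d u) = dX (TH u)" for u
    by (induct u) (simp_all add: inv_1[OF invX] inv_mult[OF invX, symmetric] phid PdX)
  have "Phi (tdag d F) = linS sX (\<lambda>u. WD (map d u)) F"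
    unfolding tdag_lin Phi_def by (simp add: linX_lin linS_ws[OF kmX])
  also have "\<dots> = linS sX (\<lambda>u. dX (WD u)) F"
    by (rule linS_cong[OF kmX]) (case_tac u, simp_all add: thd phid inv_mult[OF invX] dX0)
  also have "\<dots> = dX (Phi F)" unfolding Phi_def
    by (rule linX_map[symmetric]) (simp_all add: dXlin)
  finally show ?thesis .
qed

lemma uniq:
  assumes mor: "tplus_rq_mor sA q sX PX \<Psi>" and iA: "\<And>a. \<Psi> (iA a) = \<phi> a" and F: "F \<in> TP"
  shows "\<Psi> F = Phi F"
proof -
  have Pa: "\<And>F G. F \<in> TP \<Longrightarrow> G \<in> TP \<Longrightarrow> \<Psi> (F + G) = \<Psi> F + \<Psi> G"
    and Ps: "\<And>c F. F \<in> TP \<Longrightarrow> \<Psi> (fsc c F) = sX c (\<Psi> F)"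
    and Pm: "\<And>F G. F \<in> TP \<Longrightarrow> G \<in> TP \<Longrightarrow> \<Psi> (pmul q F G) = \<Psi> F * \<Psi> G"
    and PP: "\<And>F. F \<in> TP \<Longrightarrow> \<Psi> (PA F) = PX (\<Psi> F)"
    using mor unfolding tplus_rq_mor_def by blast+
  have ws: "u \<noteq> [] \<Longrightarrow> \<Psi> (wsingle u) = WD u" for u
  proof (induct u)
    case Nil then show ?case by simp
  next
    case (Cons a U)
    show ?case
    proof (cases "U = []")
      case True
      then show ?thesis using iA[of a] by (simp add: iA_def)
    next
      case False
      have "wsingle (a # U) = pmul q (wsingle [a]) (PA (wsingle U))" by (simp add: PA_ws pre_ws)
      then have "\<Psi> (wsingle (a # U)) = \<Psi> (wsingle [a]) * PX (\<Psi> (wsingle U))"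
        using False by (simp add: Pm PP TP_ws TP_PA)
      then show ?thesis using Cons False iA[of a] by (simp add: iA_def th_Wd)
    qed
  qed
  have "\<Psi> F = \<Psi> (lin wsingle F)" using F by (simp add: lin_ws_id TP_FS)
  also have "\<dots> = linS sX (\<lambda>u. \<Psi> (wsingle u)) F"
    by (rule linS_hom[OF kmX, where D=TP]) (simp_all add: Pa Ps TP_add TP_fsc TP_0 TP_ws TP_Nil[OF F])
  also have "\<dots> = Phi F" unfolding Phi_def
    by (rule linS_cong[OF kmX]) (simp add: ws TP_Nil[OF F])
  finally show ?thesis .
qed

end


theorem theorem4p9:
  fixes sA :: "'k::field_char_0 \<Rightarrow> 'a::comm_ring_1 \<Rightarrow> 'a"
    and d :: "'a \<Rightarrow> 'a"
    and q :: "'k rq"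
  assumes "kalg sA"
    and "involution sA d"
  shows "tplus_inv_comm_rq sA d q
    \<and> (\<forall>(sX :: 'k \<Rightarrow> 'x::comm_ring_1 \<Rightarrow> 'x) PX dX \<phi>.
          inv_comm_rq_algebra sX PX q dX \<and> alg_hom sA sX \<phi> \<and> (\<forall>a. \<phi> (d a) = dX (\<phi> a)) \<longrightarrow>
          (\<exists>\<Phi>. tplus_rq_mor sA q sX PX \<Phi> \<and> (\<forall>a. \<Phi> (iA a) = \<phi> a)
               \<and> (\<forall>F\<in>TP. \<Phi> (tdag d F) = dX (\<Phi> F))
               \<and> (\<forall>\<Psi>. tplus_rq_mor sA q sX PX \<Psi> \<and> (\<forall>a. \<Psi> (iA a) = \<phi> a) \<longrightarrow>
                      (\<forall>F\<in>TP. \<Psi> F = \<Phi> F))))"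
proof (intro conjI allI impI)
  show "tplus_inv_comm_rq sA d q" by (rule part1[OF assms])
  fix sX :: "'k \<Rightarrow> 'x \<Rightarrow> 'x" and PX dX \<phi>
  assume h: "inv_comm_rq_algebra sX PX q dX \<and> alg_hom sA sX \<phi> \<and> (\<forall>a. \<phi> (d a) = dX (\<phi> a))"
  then have kX: "kalg sX" and PXl: "klinear sX sX PX" and rq: "rq_op sX q PX" and hom: "alg_hom sA sX \<phi>"
    and invX: "involution sX dX" and PdX: "\<And>x. PX (dX x) = dX (PX x)" and phid: "\<And>a. \<phi> (d a) = dX (\<phi> a)"
    by (auto simp: inv_comm_rq_algebra_def comm_rq_algebra_def)
  interpret U: UP sA sX PX \<phi> q by (unfold_locales) (fact kX PXl rq hom)+
  show "\<exists>\<Phi>. tplus_rq_mor sA q sX PX \<Phi> \<and> (\<forall>a. \<Phi> (iA a) = \<phi> a)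
               \<and> (\<forall>F\<in>TP. \<Phi> (tdag d F) = dX (\<Phi> F))
               \<and> (\<forall>\<Psi>. tplus_rq_mor sA q sX PX \<Psi> \<and> (\<forall>a. \<Psi> (iA a) = \<phi> a) \<longrightarrow>
                      (\<forall>F\<in>TP. \<Psi> F = \<Phi> F))"
  proof (intro exI[of _ U.Phi] conjI allI ballI impI)
    show "tplus_rq_mor sA q sX PX U.Phi" by (rule U.Phi_mor)
    fix a show "U.Phi (iA a) = \<phi> a" by (rule U.Phi_iA)
  next
    fix F :: "'a list \<Rightarrow> 'k" assume "F \<in> TP"
    then show "U.Phi (tdag d F) = dX (U.Phi F)"
      by (intro U.Phi_tdag[OF invX PdX phid]) (simp add: TP_FS)
  next
    fix \<Psi> :: "('a list \<Rightarrow> 'k) \<Rightarrow> 'x" and F :: "'a list \<Rightarrow> 'k"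
    assume "tplus_rq_mor sA q sX PX \<Psi> \<and> (\<forall>a. \<Psi> (iA a) = \<phi> a)" and "F \<in> TP"
    then show "\<Psi> F = U.Phi F" using U.uniq by blast
  qed
qed

end
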